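(* Let the data $(x_1,x_2,t,y)$ be generated by the linear-Gaussian model described in the context, with $c_1\neq 0$, $c_2\neq 0$, $c_t\neq 0$ and all noise variances $\sigma_1^2,\sigma_2^2,\sigma_t^2,\sigma_y^2>0$. Consider the linear CEVAE with one-dimensional latent space ($d=1$). Let $(\theta^*,\phi^* )$ be any global maximizer of the population ELBO $\mathcal{L}(\theta,\phi)=\mathbb{E}_{(x,t,y)\sim p}\big[\ell_{\theta,\phi}(x,t,y)\big]$ (the infinite-data limit). Then for every $t\in\mathbb{R}$, the CEVAE causal effect estimate coincides with the true interventional distribution: $p_{\theta^*}(y\mid do(t)) = p(y\mid do(t))$.
   Context: Linear-Gaussian data generating model: $z\sim\mathcal N(0,1)$ is an unobserved confounder; given $z$, the observed variables are independent draws $x_1\mid z\sim\mathcal N(c_1 z,\sigma_1^2)$, $x_2\mid z\sim\mathcal N(c_2 z,\sigma_2^2)$, $t\mid z\sim\mathcal N(c_t z,\sigma_t^2)$, and $y\mid z,t\sim\mathcal N(c_{yz}z+c_{yt}t,\sigma_y^2)$, where $c_\cdot\in\mathbb R$ and $\sigma_\cdot>0$ are fixed parameters. Only $(x,t,y)$ with $x=(x_1,x_2)$ is observed, with joint law $p(x,t,y)$. The true interventional distribution is $p(y\mid do(t))=\int p(y\mid z,t)p(z)\,dz$. CEVAE: a latent variable model with latent $z\in\mathbb R^d$, prior $p(z)=\mathcal N(0,I_d)$, and decoder factorizing as $p_\theta(x,t,y\mid z)=p_\theta(x\mid z)\,p_\theta(t\mid z)\,p_\theta(y\mid z,t)$,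 together with an encoder (variational posterior) $q_\phi(z\mid x,t,y)$. For an observation $(x,t,y)$ its ELBO is $\ell_{\theta,\phi}(x,t,y)=\mathbb E_{q_\phi(z\mid x,t,y)}[\log p_\theta(x\mid z)+\log p_\theta(t\mid z)+\log p_\theta(y\mid z,t)]-\mathrm{KL}[q_\phi(z\mid x,t,y)\,\|\,p(z)]$. The CEVAE causal effect estimate is $p_\theta(y\mid do(t))=\int p_\theta(y\mid z,t)\,p(z)\,dz$. Linear CEVAE: every conditional is Gaussian with mean a linear function (no bias) of its inputs and a single variance parameter shared across all data points: $p_\theta(x_j\mid z)=\mathcal N(\gamma_j^\top z,s_j^2)$ for $j=1,2$, $p_\theta(t\mid z)=\mathcal N(\gamma_t^\top z,s_t^2)$, $p_\theta(y\mid z,t)=\mathcal N(\gamma_{yz}^\top z+\gamma_{yt}t,s_y^2)$, and $q_\phi(z\mid x,t,y)=\mathcal N(A(x_1,x_2,t,y)^\top,\,S)$ with $A$ a $d\times 4$ matrix and $S$ a fixed (data-independent) positive definite covariance (for $d=1$, a single variance). *)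

theory Defs
  imports "HOL-Probability.Probability"
begin

text \<open>Conventions: every Gaussian is parametrised by its mean and its standard
deviation (normal_density mu sigma), the standard deviation being positive.\<close>

record true_model =
  c1 :: real  c2 :: real  ct :: real  cyz :: real  cyt :: real
  sig1 :: real  sig2 :: real  sigt :: real  sigy :: real

definition valid_model :: "true_model \<Rightarrow> bool" where
  "valid_model M \<longleftrightarrow> c1 M \<noteq> 0 \<and> c2 M \<noteq> 0 \<and> ct M \<noteq> 0 \<and>
     sig1 M > 0 \<and> sig2 M > 0 \<and> sigt M > 0 \<and> sigy M > 0"

definition true_joint :: "true_model \<Rightarrow> real \<Rightarrow> real \<Rightarrow> real \<Rightarrow> real \<Rightarrow> real \<Rightarrow> real" where
  "true_joint M z x1 x2 t y =
     std_normal_density z * normal_density (c1 M * z) (sig1 M) x1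
     * normal_density (c2 M * z) (sig2 M) x2 * normal_density (ct M * z) (sigt M) t
     * normal_density (cyz M * z + cyt M * t) (sigy M) y"

definition true_obs_density :: "true_model \<Rightarrow> real \<Rightarrow> real \<Rightarrow> real \<Rightarrow> real \<Rightarrow> real" where
  "true_obs_density M x1 x2 t y = (\<integral>z. true_joint M z x1 x2 t y \<partial>lborel)"

definition true_do :: "true_model \<Rightarrow> real \<Rightarrow> real \<Rightarrow> real" where
  "true_do M t y = (\<integral>z. normal_density (cyz M * z + cyt M * t) (sigy M) y * std_normal_density z \<partial>lborel)"

text \<open>Linear CEVAE with one-dimensional latent space: decoder parameters theta
(gamma's and standard deviations s) and encoder parameters phi
(A = (a1,a2,a3,a4) and the encoder standard deviation sq, i.e. S = sq^2).\<close>
record lin_cevae =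
  g1 :: real  g2 :: real  gt :: real  gyz :: real  gyt :: real
  s1 :: real  s2 :: real  st :: real  sy :: real
  a1 :: real  a2 :: real  a3 :: real  a4 :: real  sq :: real

definition valid_cevae :: "lin_cevae \<Rightarrow> bool" where
  "valid_cevae P \<longleftrightarrow> s1 P > 0 \<and> s2 P > 0 \<and> st P > 0 \<and> sy P > 0 \<and> sq P > 0"

definition enc :: "lin_cevae \<Rightarrow> real \<Rightarrow> real \<Rightarrow> real \<Rightarrow> real \<Rightarrow> real \<Rightarrow> real" where
  "enc P x1 x2 t y z = normal_density (a1 P * x1 + a2 P * x2 + a3 P * t + a4 P * y) (sq P) z"

definition dec_loglik :: "lin_cevae \<Rightarrow> real \<Rightarrow> real \<Rightarrow> real \<Rightarrow> real \<Rightarrow> real \<Rightarrow> real" where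
  "dec_loglik P z x1 x2 t y =
     ln (normal_density (g1 P * z) (s1 P) x1) + ln (normal_density (g2 P * z) (s2 P) x2)
     + ln (normal_density (gt P * z) (st P) t)
     + ln (normal_density (gyz P * z + gyt P * t) (sy P) y)"

definition enc_KL :: "lin_cevae \<Rightarrow> real \<Rightarrow> real \<Rightarrow> real \<Rightarrow> real \<Rightarrow> real" where
  "enc_KL P x1 x2 t y =
     (\<integral>z. enc P x1 x2 t y z * ln (enc P x1 x2 t y z / std_normal_density z) \<partial>lborel)"

definition elbo :: "lin_cevae \<Rightarrow> real \<Rightarrow> real \<Rightarrow> real \<Rightarrow> real \<Rightarrow> real" where
  "elbo P x1 x2 t y =
     (\<integral>z. enc P x1 x2 t y z * dec_loglik P z x1 x2 t y \<partial>lborel) - enc_KL P x1 x2 t y"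

definition pop_elbo :: "true_model \<Rightarrow> lin_cevae \<Rightarrow> real" where
  "pop_elbo M P =
     (\<integral>x1. \<integral>x2. \<integral>t. \<integral>y. true_obs_density M x1 x2 t y * elbo P x1 x2 t y
        \<partial>lborel \<partial>lborel \<partial>lborel \<partial>lborel)"

definition cevae_do :: "lin_cevae \<Rightarrow> real \<Rightarrow> real \<Rightarrow> real" where
  "cevae_do P t y = (\<integral>z. normal_density (gyz P * z + gyt P * t) (sy P) y * std_normal_density z \<partial>lborel)"

end

theory Submission
  imports Defs
begin

lemma gauss_quad:
  assumes s: "0 < (\<sigma>::real)"
  shows "has_bochner_integral lborel (\<lambda>x. normal_density \<mu> \<sigma> x * (A + B*x + C*x^2)) (A + B*\<mu> + C*(\<mu>^2+\<sigma>^2))"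
proof -
  have h0: "has_bochner_integral lborel (\<lambda>x. normal_density \<mu> \<sigma> x) 1"
    using normal_moment_even[OF s, of \<mu> 0] by simp
  have h1: "has_bochner_integral lborel (\<lambda>x. normal_density \<mu> \<sigma> x * x) \<mu>"
    using normal_moment_nz_1[OF s] .
  have h2: "has_bochner_integral lborel (\<lambda>x. normal_density \<mu> \<sigma> x * (x-\<mu>)^2) (\<sigma>^2)"
  proof -
    have e: "fact (2 * 1) / ((2 / \<sigma>\<^sup>2) ^ 1 * fact 1) = (\<sigma>^2::real)" using s by simp
    show ?thesis using normal_moment_even[OF s, of \<mu> 1] unfolding e by simp
  qed
  have X: "has_bochner_integral lborel (\<lambda>x. (A - C*\<mu>^2) * normal_density \<mu> \<sigma> x + (B + 2*C*\<mu>) * (normal_density \<mu> \<sigma> x * x) + C * (normal_density \<mu> \<sigma> x * (x-\<mu>)^2))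
     ((A - C*\<mu>^2) * 1 + (B + 2*C*\<mu>) * \<mu> + C * \<sigma>^2)"
    by (intro has_bochner_integral_add has_bochner_integral_mult_right h0 h1 h2)
  have eqf: "(\<lambda>x. (A - C*\<mu>^2) * normal_density \<mu> \<sigma> x + (B + 2*C*\<mu>) * (normal_density \<mu> \<sigma> x * x) + C * (normal_density \<mu> \<sigma> x * (x-\<mu>)^2))
     = (\<lambda>x. normal_density \<mu> \<sigma> x * (A + B*x + C*x^2))"
    by (rule ext) (simp add: algebra_simps power2_eq_square)
  have eqv: "(A - C*\<mu>^2) * 1 + (B + 2*C*\<mu>) * \<mu> + C * \<sigma>^2 = A + B*\<mu> + C*(\<mu>^2+\<sigma>^2)"
    by (simp add: algebra_simps power2_eq_square)
  show ?thesis using X unfolding eqf eqv .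
qed


definition q2 :: "real \<Rightarrow> real \<Rightarrow> real \<Rightarrow> real \<Rightarrow> real \<Rightarrow> real \<Rightarrow> real \<Rightarrow> real \<Rightarrow> real" where
  "q2 k0 k1 k2 k3 k4 k5 z w = k0 + k1*z + k2*w + k3*z^2 + k4*z*w + k5*w^2"

lemma q2_bound:
  "\<bar>q2 k0 k1 k2 k3 k4 k5 z w\<bar> \<le> (\<bar>k0\<bar>+\<bar>k1\<bar>+\<bar>k2\<bar>+\<bar>k3\<bar>+\<bar>k4\<bar>+\<bar>k5\<bar>) * (1 + z^2 + w^2)"
proof -
  have sq: "\<bar>x\<bar> \<le> 1 + x^2" for x::real
  proof -
    have "0 \<le> (\<bar>x\<bar> - 1)^2" by simp
    hence "2*\<bar>x\<bar> \<le> 1 + x^2" by (simp add: power2_eq_square algebra_simps)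
    thus ?thesis by simp
  qed
  have az: "\<bar>z\<bar> \<le> 1 + z^2 + w^2" using sq[of z] zero_le_power2[of w] by linarith
  have aw: "\<bar>w\<bar> \<le> 1 + z^2 + w^2" using sq[of w] zero_le_power2[of z] by linarith
  have azw: "\<bar>z*w\<bar> \<le> 1 + z^2 + w^2"
  proof -
    have "0 \<le> (\<bar>z\<bar> - \<bar>w\<bar>)^2" by simp
    hence "2*\<bar>z*w\<bar> \<le> z^2 + w^2" by (simp add: power2_eq_square algebra_simps abs_mult)
    thus ?thesis by simp
  qed
  have a2: "z^2 \<le> 1 + z^2 + w^2" "w^2 \<le> 1 + z^2 + w^2" "1 \<le> 1 + z^2 + w^2" by simp_all
  have "\<bar>q2 k0 k1 k2 k3 k4 k5 z w\<bar> \<le> \<bar>k0\<bar> + \<bar>k1\<bar>*\<bar>z\<bar> + \<bar>k2\<bar>*\<bar>w\<bar> + \<bar>k3\<bar>*z^2 + \<bar>k4\<bar>*\<bar>z*w\<bar> + \<bar>k5\<bar>*w^2"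
    unfolding q2_def abs_mult[symmetric] mult.assoc[symmetric]
    by (intro order.trans[OF abs_triangle_ineq] add_mono order_refl) (simp_all add: abs_mult)
  also have "\<dots> \<le> \<bar>k0\<bar>*(1 + z^2 + w^2) + \<bar>k1\<bar>*(1 + z^2 + w^2) + \<bar>k2\<bar>*(1 + z^2 + w^2) + \<bar>k3\<bar>*(1 + z^2 + w^2) + \<bar>k4\<bar>*(1 + z^2 + w^2) + \<bar>k5\<bar>*(1 + z^2 + w^2)"
    by (intro add_mono mult_left_mono az aw azw a2 abs_ge_zero) (use a2(3) mult_left_mono[OF a2(3), of "\<bar>k0\<bar>"] in simp)
  also have "\<dots> = (\<bar>k0\<bar>+\<bar>k1\<bar>+\<bar>k2\<bar>+\<bar>k3\<bar>+\<bar>k4\<bar>+\<bar>k5\<bar>) * (1 + z^2 + w^2)" by (simp add: algebra_simps)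
  finally show ?thesis .
qed


lemma gauss_q2:
  assumes s: "0 < (\<sigma>::real)"
  shows "has_bochner_integral lborel (\<lambda>w. normal_density \<mu> \<sigma> w * q2 k0 k1 k2 k3 k4 k5 z w)
     (k0 + k1*z + k3*z^2 + (k2 + k4*z)*\<mu> + k5*(\<mu>^2+\<sigma>^2))"
proof -
  have "has_bochner_integral lborel (\<lambda>w. normal_density \<mu> \<sigma> w * ((k0 + k1*z + k3*z^2) + (k2 + k4*z)*w + k5*w^2))
     ((k0 + k1*z + k3*z^2) + (k2 + k4*z)*\<mu> + k5*(\<mu>^2+\<sigma>^2))"
    by (rule gauss_quad[OF s])
  moreover have "(\<lambda>w. normal_density \<mu> \<sigma> w * ((k0 + k1*z + k3*z^2) + (k2 + k4*z)*w + k5*w^2))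
     = (\<lambda>w. normal_density \<mu> \<sigma> w * q2 k0 k1 k2 k3 k4 k5 z w)"
    by (rule ext) (simp add: q2_def algebra_simps)
  ultimately show ?thesis by simp
qed

lemma swap:
  assumes s: "0 < \<sigma>" and Am[measurable]: "A \<in> borel_measurable borel"
    and Ab: "\<And>z. \<bar>A z\<bar> \<le> K * std_normal_density z"
  shows "(\<integral>w. (\<integral>z. A z * (normal_density (\<alpha>*z+\<beta>) \<sigma> w * q2 k0 k1 k2 k3 k4 k5 z w) \<partial>lborel) \<partial>lborel)
       = (\<integral>z. A z * (k0 + k1*z + k3*z^2 + (k2 + k4*z)*(\<alpha>*z+\<beta>) + k5*((\<alpha>*z+\<beta>)^2+\<sigma>^2)) \<partial>lborel)"
proof -
  define f where "f = (\<lambda>z w. A z * (normal_density (\<alpha>*z+\<beta>) \<sigma> w * q2 k0 k1 k2 k3 k4 k5 z w))"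
  define Kq where "Kq = \<bar>k0\<bar>+\<bar>k1\<bar>+\<bar>k2\<bar>+\<bar>k3\<bar>+\<bar>k4\<bar>+\<bar>k5\<bar>"
  have Kq0: "0 \<le> Kq" unfolding Kq_def by simp
  have K0: "0 \<le> K"
  proof -
    have "0 \<le> K * std_normal_density 0" using Ab[of 0] by linarith
    moreover have "0 < std_normal_density 0" by (simp add: normal_density_pos)
    ultimately show ?thesis by (simp add: zero_le_mult_iff)
  qed
  have fm[measurable]: "case_prod f \<in> borel_measurable (lborel \<Otimes>\<^sub>M lborel)"
    unfolding f_def q2_def normal_density_def by measurable
  have i2: "integrable lborel (\<lambda>w. f z w)" for z
    unfolding f_def by (intro integrable_mult_right integrable.intros[OF gauss_q2[OF s]])
  have iv: "(\<integral>w. f z w \<partial>lborel) = A z * (k0 + k1*z + k3*z^2 + (k2 + k4*z)*(\<alpha>*z+\<beta>) + k5*((\<alpha>*z+\<beta>)^2+\<sigma>^2))" for z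
    unfolding f_def integral_mult_right_zero using has_bochner_integral_integral_eq[OF gauss_q2[OF s]] by simp
  define g where "g = (\<lambda>z. K * Kq * (std_normal_density z * ((1 + \<beta>^2 + \<sigma>^2) + (2*\<alpha>*\<beta>)*z + (1+\<alpha>^2)*z^2)))"
  have gi: "integrable lborel g"
    unfolding g_def by (intro integrable_mult_right integrable.intros[OF gauss_quad]) simp
  have bnd: "\<bar>f z w\<bar> \<le> \<bar>A z\<bar> * (Kq * (normal_density (\<alpha>*z+\<beta>) \<sigma> w * (1 + z^2 + w^2)))" for z w
  proof -
    have "\<bar>f z w\<bar> = \<bar>A z\<bar> * (normal_density (\<alpha>*z+\<beta>) \<sigma> w * \<bar>q2 k0 k1 k2 k3 k4 k5 z w\<bar>)"
      unfolding f_def by (simp add: abs_mult)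
    also have "\<dots> \<le> \<bar>A z\<bar> * (normal_density (\<alpha>*z+\<beta>) \<sigma> w * (Kq * (1 + z^2 + w^2)))"
      unfolding Kq_def by (intro mult_left_mono q2_bound normal_density_nonneg abs_ge_zero)
    finally show ?thesis by (simp add: ac_simps)
  qed
  have ib: "integrable lborel (\<lambda>w. \<bar>A z\<bar> * (Kq * (normal_density (\<alpha>*z+\<beta>) \<sigma> w * (1 + z^2 + w^2))))" for z
  proof -
    have "integrable lborel (\<lambda>w. normal_density (\<alpha>*z+\<beta>) \<sigma> w * ((1 + z^2) + 0*w + 1*w^2))"
      by (rule integrable.intros[OF gauss_quad[OF s]])
    thus ?thesis by (intro integrable_mult_right) simp
  qed
  have ibv: "(\<integral>w. \<bar>A z\<bar> * (Kq * (normal_density (\<alpha>*z+\<beta>) \<sigma> w * (1 + z^2 + w^2))) \<partial>lborel)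
      = \<bar>A z\<bar> * (Kq * ((1 + z^2) + 1*((\<alpha>*z+\<beta>)^2+\<sigma>^2)))" for z
  proof -
    have "(\<integral>w. normal_density (\<alpha>*z+\<beta>) \<sigma> w * ((1 + z^2) + 0*w + 1*w^2) \<partial>lborel) = (1 + z^2) + 0*(\<alpha>*z+\<beta>) + 1*((\<alpha>*z+\<beta>)^2+\<sigma>^2)"
      by (rule has_bochner_integral_integral_eq[OF gauss_quad[OF s]])
    thus ?thesis by (simp add: integral_mult_right_zero)
  qed
  have i1: "integrable lborel (\<lambda>z. \<integral>w. norm (case_prod f (z, w)) \<partial>lborel)"
  proof (rule Bochner_Integration.integrable_bound[OF gi])
    show "(\<lambda>z. \<integral>w. norm (case_prod f (z, w)) \<partial>lborel) \<in> borel_measurable lborel" by measurable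
    show "AE z in lborel. norm (\<integral>w. norm (case_prod f (z, w)) \<partial>lborel) \<le> norm (g z)"
    proof (rule AE_I2)
      fix z
      have "(\<integral>w. norm (case_prod f (z, w)) \<partial>lborel) \<le> (\<integral>w. \<bar>A z\<bar> * (Kq * (normal_density (\<alpha>*z+\<beta>) \<sigma> w * (1 + z^2 + w^2))) \<partial>lborel)"
        using bnd by (intro integral_mono ib) (auto intro: integrable_abs i2)
      also have "\<dots> = \<bar>A z\<bar> * (Kq * ((1 + z^2) + 1*((\<alpha>*z+\<beta>)^2+\<sigma>^2)))" by (rule ibv)
      also have "\<dots> \<le> (K * std_normal_density z) * (Kq * ((1 + z^2) + 1*((\<alpha>*z+\<beta>)^2+\<sigma>^2)))"
        by (intro mult_right_mono Ab mult_nonneg_nonneg Kq0) simp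
      also have "\<dots> = g z" unfolding g_def by (simp add: algebra_simps power2_eq_square)
      finally have le: "(\<integral>w. norm (case_prod f (z, w)) \<partial>lborel) \<le> g z" .
      have "0 \<le> (\<integral>w. norm (case_prod f (z, w)) \<partial>lborel)" by (rule integral_nonneg_AE) simp
      with le show "norm (\<integral>w. norm (case_prod f (z, w)) \<partial>lborel) \<le> norm (g z)" by simp
    qed
  qed
  have int: "integrable (lborel \<Otimes>\<^sub>M lborel) (case_prod f)"
    by (rule lborel_pair.Fubini_integrable[OF fm i1]) (simp add: i2)
  have "(\<integral>w. (\<integral>z. f z w \<partial>lborel) \<partial>lborel) = (\<integral>z. (\<integral>w. f z w \<partial>lborel) \<partial>lborel)"
    by (rule lborel_pair.Fubini_integral[OF int])
  also have "\<dots> = (\<integral>z. A z * (k0 + k1*z + k3*z^2 + (k2 + k4*z)*(\<alpha>*z+\<beta>) + k5*((\<alpha>*z+\<beta>)^2+\<sigma>^2)) \<partial>lborel)"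
    by (simp add: iv)
  finally show ?thesis unfolding f_def .
qed


definition Qd :: "real \<Rightarrow> real \<Rightarrow> real \<Rightarrow> real \<Rightarrow> real \<Rightarrow> real \<Rightarrow> real \<Rightarrow> real \<Rightarrow> real \<Rightarrow> real \<Rightarrow> real \<Rightarrow> real \<Rightarrow> real \<Rightarrow> real \<Rightarrow> real \<Rightarrow> real \<Rightarrow> real \<Rightarrow> real \<Rightarrow> real \<Rightarrow> real" where
  "Qd c0 l1 l2 lt ly c11 c22 ctt cyy c12 c1t c1y c2t c2y cty x1 x2 t y =
    c0 + l1*x1 + l2*x2 + lt*t + ly*y + c11*x1^2 + c22*x2^2 + ctt*t^2 + cyy*y^2
    + c12*x1*x2 + c1t*x1*t + c1y*x1*y + c2t*x2*t + c2y*x2*y + cty*t*y"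

lemma nd_le: "normal_density \<mu> \<sigma> x \<le> 1 / sqrt (2*pi*\<sigma>^2)"
proof -
  have e: "exp (- ((x - \<mu>)^2 / (2 * \<sigma>^2))) \<le> 1" by simp
  show ?thesis unfolding normal_density_def using divide_right_mono[OF e, of "sqrt (2*pi*\<sigma>^2)"] by simp
qed

lemma nd_bound_prod:
  assumes "0 \<le> (B::real)" "0 \<le> X" "X \<le> B"
  shows "\<bar>std_normal_density z * X\<bar> \<le> B * std_normal_density z"
  using assms mult_left_mono[OF assms(3) normal_density_nonneg[of 0 1 z]] by (simp add: abs_mult ac_simps)

lemma lev_y:
  assumes vm: "valid_model M"
  shows "(\<integral>y. true_obs_density M x1 x2 t y * Qd c0 l1 l2 lt ly c11 c22 ctt cyy c12 c1t c1y c2t c2y cty x1 x2 t y \<partial>lborel)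
   = (\<integral>z. (std_normal_density z * (normal_density (c1 M*z) (sig1 M) x1 * normal_density (c2 M*z) (sig2 M) x2 * normal_density (ct M*z) (sigt M) t)) * ((c0 + l1*x1 + l2*x2 + lt*t + c11*x1^2 + c22*x2^2 + ctt*t^2 + c12*x1*x2 + c1t*x1*t + c2t*x2*t) + 0*z + 0*z^2 + ((ly + c1y*x1 + c2y*x2 + cty*t) + 0*z)*((cyz M)*z+(cyt M*t)) + cyy*(((cyz M)*z+(cyt M*t))^2+(sigy M)^2)) \<partial>lborel)"
proof -
  have s: "0 < sigy M" using vm unfolding valid_model_def by simp
  have "(\<integral>y. true_obs_density M x1 x2 t y * Qd c0 l1 l2 lt ly c11 c22 ctt cyy c12 c1t c1y c2t c2y cty x1 x2 t y \<partial>lborel)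
    = (\<integral>y. (\<integral>z. (std_normal_density z * (normal_density (c1 M*z) (sig1 M) x1 * normal_density (c2 M*z) (sig2 M) x2 * normal_density (ct M*z) (sigt M) t)) * (normal_density (cyz M*z+cyt M*t) (sigy M) y * q2 (c0 + l1*x1 + l2*x2 + lt*t + c11*x1^2 + c22*x2^2 + ctt*t^2 + c12*x1*x2 + c1t*x1*t + c2t*x2*t) 0 (ly + c1y*x1 + c2y*x2 + cty*t) 0 0 cyy z y) \<partial>lborel) \<partial>lborel)"
    unfolding true_obs_density_def true_joint_def integral_mult_left_zero[symmetric]
    by (intro Bochner_Integration.integral_cong refl) (simp add: Qd_def q2_def algebra_simps)
  also have "\<dots> = (\<integral>z. (std_normal_density z * (normal_density (c1 M*z) (sig1 M) x1 * normal_density (c2 M*z) (sig2 M) x2 * normal_density (ct M*z) (sigt M) t)) * ((c0 + l1*x1 + l2*x2 + lt*t + c11*x1^2 + c22*x2^2 + ctt*t^2 + c12*x1*x2 + c1t*x1*t + c2t*x2*t) + 0*z + 0*z^2 + ((ly + c1y*x1 + c2y*x2 + cty*t) + 0*z)*((cyz M)*z+(cyt M*t)) + cyy*(((cyz M)*z+(cyt M*t))^2+(sigy M)^2)) \<partial>lborel)"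
  proof (rule swap[OF s])
    show "(\<lambda>z. std_normal_density z * (normal_density (c1 M*z) (sig1 M) x1 * normal_density (c2 M*z) (sig2 M) x2 * normal_density (ct M*z) (sigt M) t)) \<in> borel_measurable borel"
      unfolding normal_density_def by measurable
    show "\<bar>std_normal_density z * (normal_density (c1 M*z) (sig1 M) x1 * normal_density (c2 M*z) (sig2 M) x2 * normal_density (ct M*z) (sigt M) t)\<bar> \<le> (1 / sqrt (2*pi*(sig1 M)^2) * (1 / sqrt (2*pi*(sig2 M)^2)) * (1 / sqrt (2*pi*(sigt M)^2))) * std_normal_density z" for z
      by (intro nd_bound_prod mult_mono nd_le mult_nonneg_nonneg normal_density_nonneg) simp_all
  qed
  finally show ?thesis .
qed

lemma lev_t_poly: "((c0 + l1*x1 + l2*x2 + lt*t + c11*x1^2 + c22*x2^2 + ctt*t^2 + c12*x1*x2 + c1t*x1*t + c2t*x2*t) + 0*z + 0*z^2 + ((ly + c1y*x1 + c2y*x2 + cty*t) + 0*z)*((cyz M)*z+(cyt M*t)) + cyy*(((cyz M)*z+(cyt M*t))^2+(sigy M)^2)) = q2 (c0 + l1*x1 + l2*x2 + c11*x1^2 + c22*x2^2 + c12*x1*x2 + cyy*(sigy M)^2) ((ly + c1y*x1 + c2y*x2)*(cyz M)) (lt + c1t*x1 + c2t*x2 + (ly + c1y*x1 + c2y*x2)*(cyt M)) (cyy*(cyz M)^2) (cty*(cyz M) + 2*cyy*(cyz M)*(cyt M)) (ctt + cty*(cyt M) + cyy*(cyt M)^2) z t"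
  unfolding q2_def by (simp add: algebra_simps power2_eq_square)

lemma lev_t:
  assumes vm: "valid_model M"
  shows "(\<integral>t. (\<integral>z. (std_normal_density z * (normal_density (c1 M*z) (sig1 M) x1 * normal_density (c2 M*z) (sig2 M) x2 * normal_density (ct M*z) (sigt M) t)) * ((c0 + l1*x1 + l2*x2 + lt*t + c11*x1^2 + c22*x2^2 + ctt*t^2 + c12*x1*x2 + c1t*x1*t + c2t*x2*t) + 0*z + 0*z^2 + ((ly + c1y*x1 + c2y*x2 + cty*t) + 0*z)*((cyz M)*z+(cyt M*t)) + cyy*(((cyz M)*z+(cyt M*t))^2+(sigy M)^2)) \<partial>lborel) \<partial>lborel)
   = (\<integral>z. (std_normal_density z * (normal_density (c1 M*z) (sig1 M) x1 * normal_density (c2 M*z) (sig2 M) x2)) * ((c0 + l1*x1 + l2*x2 + c11*x1^2 + c22*x2^2 + c12*x1*x2 + cyy*(sigy M)^2) + ((ly + c1y*x1 + c2y*x2)*(cyz M))*z + (cyy*(cyz M)^2)*z^2 + ((lt + c1t*x1 + c2t*x2 + (ly + c1y*x1 + c2y*x2)*(cyt M)) + (cty*(cyz M) + 2*cyy*(cyz M)*(cyt M))*z)*((ct M)*z+(0)) + (ctt + cty*(cyt M) + cyy*(cyt M)^2)*(((ct M)*z+(0))^2+(sigt M)^2)) \<partial>lborel)"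
proof -
  have s: "0 < sigt M" using vm unfolding valid_model_def by simp
  have "(\<integral>t. (\<integral>z. (std_normal_density z * (normal_density (c1 M*z) (sig1 M) x1 * normal_density (c2 M*z) (sig2 M) x2 * normal_density (ct M*z) (sigt M) t)) * ((c0 + l1*x1 + l2*x2 + lt*t + c11*x1^2 + c22*x2^2 + ctt*t^2 + c12*x1*x2 + c1t*x1*t + c2t*x2*t) + 0*z + 0*z^2 + ((ly + c1y*x1 + c2y*x2 + cty*t) + 0*z)*((cyz M)*z+(cyt M*t)) + cyy*(((cyz M)*z+(cyt M*t))^2+(sigy M)^2)) \<partial>lborel) \<partial>lborel)
    = (\<integral>t. (\<integral>z. (std_normal_density z * (normal_density (c1 M*z) (sig1 M) x1 * normal_density (c2 M*z) (sig2 M) x2)) * (normal_density ((ct M)*z+(0)) (sigt M) t * q2 (c0 + l1*x1 + l2*x2 + c11*x1^2 + c22*x2^2 + c12*x1*x2 + cyy*(sigy M)^2) ((ly + c1y*x1 + c2y*x2)*(cyz M)) (lt + c1t*x1 + c2t*x2 + (ly + c1y*x1 + c2y*x2)*(cyt M)) (cyy*(cyz M)^2) (cty*(cyz M) + 2*cyy*(cyz M)*(cyt M)) (ctt + cty*(cyt M) + cyy*(cyt M)^2) z t) \<partial>lborel) \<partial>lborel)"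
    by (intro Bochner_Integration.integral_cong refl) (simp only: lev_t_poly, simp add: ac_simps)
  also have "\<dots> = (\<integral>z. (std_normal_density z * (normal_density (c1 M*z) (sig1 M) x1 * normal_density (c2 M*z) (sig2 M) x2)) * ((c0 + l1*x1 + l2*x2 + c11*x1^2 + c22*x2^2 + c12*x1*x2 + cyy*(sigy M)^2) + ((ly + c1y*x1 + c2y*x2)*(cyz M))*z + (cyy*(cyz M)^2)*z^2 + ((lt + c1t*x1 + c2t*x2 + (ly + c1y*x1 + c2y*x2)*(cyt M)) + (cty*(cyz M) + 2*cyy*(cyz M)*(cyt M))*z)*((ct M)*z+(0)) + (ctt + cty*(cyt M) + cyy*(cyt M)^2)*(((ct M)*z+(0))^2+(sigt M)^2)) \<partial>lborel)"
  proof (rule swap[OF s])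
    show "(\<lambda>z. std_normal_density z * (normal_density (c1 M*z) (sig1 M) x1 * normal_density (c2 M*z) (sig2 M) x2)) \<in> borel_measurable borel"
      unfolding normal_density_def by measurable
    show "\<bar>std_normal_density z * (normal_density (c1 M*z) (sig1 M) x1 * normal_density (c2 M*z) (sig2 M) x2)\<bar> \<le> ((1 / sqrt (2*pi*(sig1 M)^2)) * (1 / sqrt (2*pi*(sig2 M)^2))) * std_normal_density z" for z
      by (intro nd_bound_prod mult_mono nd_le mult_nonneg_nonneg normal_density_nonneg) simp_all
  qed
  finally show ?thesis .
qed

lemma lev_x2_poly: "((c0 + l1*x1 + l2*x2 + c11*x1^2 + c22*x2^2 + c12*x1*x2 + cyy*(sigy M)^2) + ((ly + c1y*x1 + c2y*x2)*(cyz M))*z + (cyy*(cyz M)^2)*z^2 + ((lt + c1t*x1 + c2t*x2 + (ly + c1y*x1 + c2y*x2)*(cyt M)) + (cty*(cyz M) + 2*cyy*(cyz M)*(cyt M))*z)*((ct M)*z+(0)) + (ctt + cty*(cyt M) + cyy*(cyt M)^2)*(((ct M)*z+(0))^2+(sigt M)^2)) = q2 (c0 + l1*x1 + c11*x1^2 + cyy*(sigy M)^2 + (ctt + cty*(cyt M) + cyy*(cyt M)^2)*(sigt M)^2) ((ly + c1y*x1)*(cyz M) + (lt + c1t*x1 + (ly + c1y*x1)*(cyt M))*(ct M)) (l2 + c12*x1) ((cyy*(cyz M)^2) + (cty*(cyz M) + 2*cyy*(cyz M)*(cyt M))*(ct M) + (ctt + cty*(cyt M) + cyy*(cyt M)^2)*(ct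 M)^2) (c2y*(cyz M) + (c2t + c2y*(cyt M))*(ct M)) c22 z x2"
  unfolding q2_def by (simp add: algebra_simps power2_eq_square)

lemma lev_x2:
  assumes vm: "valid_model M"
  shows "(\<integral>x2. (\<integral>z. (std_normal_density z * (normal_density (c1 M*z) (sig1 M) x1 * normal_density (c2 M*z) (sig2 M) x2)) * ((c0 + l1*x1 + l2*x2 + c11*x1^2 + c22*x2^2 + c12*x1*x2 + cyy*(sigy M)^2) + ((ly + c1y*x1 + c2y*x2)*(cyz M))*z + (cyy*(cyz M)^2)*z^2 + ((lt + c1t*x1 + c2t*x2 + (ly + c1y*x1 + c2y*x2)*(cyt M)) + (cty*(cyz M) + 2*cyy*(cyz M)*(cyt M))*z)*((ct M)*z+(0)) + (ctt + cty*(cyt M) + cyy*(cyt M)^2)*(((ct M)*z+(0))^2+(sigt M)^2)) \<partial>lborel) \<partial>lborel)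
   = (\<integral>z. (std_normal_density z * (normal_density (c1 M*z) (sig1 M) x1)) * ((c0 + l1*x1 + c11*x1^2 + cyy*(sigy M)^2 + (ctt + cty*(cyt M) + cyy*(cyt M)^2)*(sigt M)^2) + ((ly + c1y*x1)*(cyz M) + (lt + c1t*x1 + (ly + c1y*x1)*(cyt M))*(ct M))*z + ((cyy*(cyz M)^2) + (cty*(cyz M) + 2*cyy*(cyz M)*(cyt M))*(ct M) + (ctt + cty*(cyt M) + cyy*(cyt M)^2)*(ct M)^2)*z^2 + ((l2 + c12*x1) + (c2y*(cyz M) + (c2t + c2y*(cyt M))*(ct M))*z)*((c2 M)*z+(0)) + c22*(((c2 M)*z+(0))^2+(sig2 M)^2)) \<partial>lborel)"
proof -
  have s: "0 < sig2 M" using vm unfolding valid_model_def by simp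
  have "(\<integral>x2. (\<integral>z. (std_normal_density z * (normal_density (c1 M*z) (sig1 M) x1 * normal_density (c2 M*z) (sig2 M) x2)) * ((c0 + l1*x1 + l2*x2 + c11*x1^2 + c22*x2^2 + c12*x1*x2 + cyy*(sigy M)^2) + ((ly + c1y*x1 + c2y*x2)*(cyz M))*z + (cyy*(cyz M)^2)*z^2 + ((lt + c1t*x1 + c2t*x2 + (ly + c1y*x1 + c2y*x2)*(cyt M)) + (cty*(cyz M) + 2*cyy*(cyz M)*(cyt M))*z)*((ct M)*z+(0)) + (ctt + cty*(cyt M) + cyy*(cyt M)^2)*(((ct M)*z+(0))^2+(sigt M)^2)) \<partial>lborel) \<partial>lborel)
    = (\<integral>x2. (\<integral>z. (std_normal_density z * (normal_density (c1 M*z) (sig1 M) x1)) * (normal_density ((c2 M)*z+(0)) (sig2 M) x2 * q2 (c0 + l1*x1 + c11*x1^2 + cyy*(sigy M)^2 + (ctt + cty*(cyt M) + cyy*(cyt M)^2)*(sigt M)^2) ((ly + c1y*x1)*(cyz M) + (lt + c1t*x1 + (ly + c1y*x1)*(cyt M))*(ct M)) (l2 + c12*x1) ((cyy*(cyz M)^2) + (cty*(cyz M) + 2*cyy*(cyz M)*(cyt M))*(ct M) + (ctt + cty*(cyt M) + cyy*(cyt M)^2)*(ct M)^2) (c2y*(cyz M) + (c2t + c2y*(cyt M))*(ct M)) c22 z x2) \<partial>lborel) \<partial>lborel)"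
    by (intro Bochner_Integration.integral_cong refl) (simp only: lev_x2_poly, simp add: ac_simps)
  also have "\<dots> = (\<integral>z. (std_normal_density z * (normal_density (c1 M*z) (sig1 M) x1)) * ((c0 + l1*x1 + c11*x1^2 + cyy*(sigy M)^2 + (ctt + cty*(cyt M) + cyy*(cyt M)^2)*(sigt M)^2) + ((ly + c1y*x1)*(cyz M) + (lt + c1t*x1 + (ly + c1y*x1)*(cyt M))*(ct M))*z + ((cyy*(cyz M)^2) + (cty*(cyz M) + 2*cyy*(cyz M)*(cyt M))*(ct M) + (ctt + cty*(cyt M) + cyy*(cyt M)^2)*(ct M)^2)*z^2 + ((l2 + c12*x1) + (c2y*(cyz M) + (c2t + c2y*(cyt M))*(ct M))*z)*((c2 M)*z+(0)) + c22*(((c2 M)*z+(0))^2+(sig2 M)^2)) \<partial>lborel)"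
  proof (rule swap[OF s])
    show "(\<lambda>z. std_normal_density z * (normal_density (c1 M*z) (sig1 M) x1)) \<in> borel_measurable borel"
      unfolding normal_density_def by measurable
    show "\<bar>std_normal_density z * (normal_density (c1 M*z) (sig1 M) x1)\<bar> \<le> ((1 / sqrt (2*pi*(sig1 M)^2))) * std_normal_density z" for z
      by (intro nd_bound_prod mult_mono nd_le mult_nonneg_nonneg normal_density_nonneg) simp_all
  qed
  finally show ?thesis .
qed

lemma lev_x1_poly: "((c0 + l1*x1 + c11*x1^2 + cyy*(sigy M)^2 + (ctt + cty*(cyt M) + cyy*(cyt M)^2)*(sigt M)^2) + ((ly + c1y*x1)*(cyz M) + (lt + c1t*x1 + (ly + c1y*x1)*(cyt M))*(ct M))*z + ((cyy*(cyz M)^2) + (cty*(cyz M) + 2*cyy*(cyz M)*(cyt M))*(ct M) + (ctt + cty*(cyt M) + cyy*(cyt M)^2)*(ct M)^2)*z^2 + ((l2 + c12*x1) + (c2y*(cyz M) + (c2t + c2y*(cyt M))*(ct M))*z)*((c2 M)*z+(0)) + c22*(((c2 M)*z+(0))^2+(sig2 M)^2)) = q2 (c0 + cyy*(sigy M)^2 + (ctt + cty*(cyt M) + cyy*(cyt M)^2)*(sigt M)^2 + c22*(sig2 M)^2) (ly*(cyz M) + (lt + ly*(cyt M))*(ct M) + l2*(c2 M)) l1 (((cyy*(cyz M)^2) + (cty*(cyz M) + 2*cyy*(cyz M)*(cyt M))*(ct M) + (ctt + cty*(cyt M) + cyy*(cyt M)^2)*(ct M)^2) + (c2y*(cyz M)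 + (c2t + c2y*(cyt M))*(ct M))*(c2 M) + c22*(c2 M)^2) (c1y*(cyz M) + (c1t + c1y*(cyt M))*(ct M) + c12*(c2 M)) c11 z x1"
  unfolding q2_def by (simp add: algebra_simps power2_eq_square)

lemma lev_x1:
  assumes vm: "valid_model M"
  shows "(\<integral>x1. (\<integral>z. (std_normal_density z * (normal_density (c1 M*z) (sig1 M) x1)) * ((c0 + l1*x1 + c11*x1^2 + cyy*(sigy M)^2 + (ctt + cty*(cyt M) + cyy*(cyt M)^2)*(sigt M)^2) + ((ly + c1y*x1)*(cyz M) + (lt + c1t*x1 + (ly + c1y*x1)*(cyt M))*(ct M))*z + ((cyy*(cyz M)^2) + (cty*(cyz M) + 2*cyy*(cyz M)*(cyt M))*(ct M) + (ctt + cty*(cyt M) + cyy*(cyt M)^2)*(ct M)^2)*z^2 + ((l2 + c12*x1) + (c2y*(cyz M) + (c2t + c2y*(cyt M))*(ct M))*z)*((c2 M)*z+(0)) + c22*(((c2 M)*z+(0))^2+(sig2 M)^2)) \<partial>lborel) \<partial>lborel)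
   = (\<integral>z. (std_normal_density z * (1)) * ((c0 + cyy*(sigy M)^2 + (ctt + cty*(cyt M) + cyy*(cyt M)^2)*(sigt M)^2 + c22*(sig2 M)^2) + (ly*(cyz M) + (lt + ly*(cyt M))*(ct M) + l2*(c2 M))*z + (((cyy*(cyz M)^2) + (cty*(cyz M) + 2*cyy*(cyz M)*(cyt M))*(ct M) + (ctt + cty*(cyt M) + cyy*(cyt M)^2)*(ct M)^2) + (c2y*(cyz M) + (c2t + c2y*(cyt M))*(ct M))*(c2 M) + c22*(c2 M)^2)*z^2 + (l1 + (c1y*(cyz M) + (c1t + c1y*(cyt M))*(ct M) + c12*(c2 M))*z)*((c1 M)*z+(0)) + c11*(((c1 M)*z+(0))^2+(sig1 M)^2)) \<partial>lborel)"
proof -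
  have s: "0 < sig1 M" using vm unfolding valid_model_def by simp
  have "(\<integral>x1. (\<integral>z. (std_normal_density z * (normal_density (c1 M*z) (sig1 M) x1)) * ((c0 + l1*x1 + c11*x1^2 + cyy*(sigy M)^2 + (ctt + cty*(cyt M) + cyy*(cyt M)^2)*(sigt M)^2) + ((ly + c1y*x1)*(cyz M) + (lt + c1t*x1 + (ly + c1y*x1)*(cyt M))*(ct M))*z + ((cyy*(cyz M)^2) + (cty*(cyz M) + 2*cyy*(cyz M)*(cyt M))*(ct M) + (ctt + cty*(cyt M) + cyy*(cyt M)^2)*(ct M)^2)*z^2 + ((l2 + c12*x1) + (c2y*(cyz M) + (c2t + c2y*(cyt M))*(ct M))*z)*((c2 M)*z+(0)) + c22*(((c2 M)*z+(0))^2+(sig2 M)^2)) \<partial>lborel) \<partial>lborel)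
    = (\<integral>x1. (\<integral>z. (std_normal_density z * (1)) * (normal_density ((c1 M)*z+(0)) (sig1 M) x1 * q2 (c0 + cyy*(sigy M)^2 + (ctt + cty*(cyt M) + cyy*(cyt M)^2)*(sigt M)^2 + c22*(sig2 M)^2) (ly*(cyz M) + (lt + ly*(cyt M))*(ct M) + l2*(c2 M)) l1 (((cyy*(cyz M)^2) + (cty*(cyz M) + 2*cyy*(cyz M)*(cyt M))*(ct M) + (ctt + cty*(cyt M) + cyy*(cyt M)^2)*(ct M)^2) + (c2y*(cyz M) + (c2t + c2y*(cyt M))*(ct M))*(c2 M) + c22*(c2 M)^2) (c1y*(cyz M) + (c1t + c1y*(cyt M))*(ct M) + c12*(c2 M)) c11 z x1) \<partial>lborel) \<partial>lborel)"
    by (intro Bochner_Integration.integral_cong refl) (simp only: lev_x1_poly, simp add: ac_simps)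
  also have "\<dots> = (\<integral>z. (std_normal_density z * (1)) * ((c0 + cyy*(sigy M)^2 + (ctt + cty*(cyt M) + cyy*(cyt M)^2)*(sigt M)^2 + c22*(sig2 M)^2) + (ly*(cyz M) + (lt + ly*(cyt M))*(ct M) + l2*(c2 M))*z + (((cyy*(cyz M)^2) + (cty*(cyz M) + 2*cyy*(cyz M)*(cyt M))*(ct M) + (ctt + cty*(cyt M) + cyy*(cyt M)^2)*(ct M)^2) + (c2y*(cyz M) + (c2t + c2y*(cyt M))*(ct M))*(c2 M) + c22*(c2 M)^2)*z^2 + (l1 + (c1y*(cyz M) + (c1t + c1y*(cyt M))*(ct M) + c12*(c2 M))*z)*((c1 M)*z+(0)) + c11*(((c1 M)*z+(0))^2+(sig1 M)^2)) \<partial>lborel)"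
  proof (rule swap[OF s])
    show "(\<lambda>z. std_normal_density z * (1)) \<in> borel_measurable borel"
      unfolding normal_density_def by measurable
    show "\<bar>std_normal_density z * (1)\<bar> \<le> (1) * std_normal_density z" for z
      by (intro nd_bound_prod mult_mono nd_le mult_nonneg_nonneg normal_density_nonneg) simp_all
  qed
  finally show ?thesis .
qed

lemma lev_z:
  "(\<integral>z. (std_normal_density z * (1)) * ((c0 + cyy*(sigy M)^2 + (ctt + cty*(cyt M) + cyy*(cyt M)^2)*(sigt M)^2 + c22*(sig2 M)^2) + (ly*(cyz M) + (lt + ly*(cyt M))*(ct M) + l2*(c2 M))*z + (((cyy*(cyz M)^2) + (cty*(cyz M) + 2*cyy*(cyz M)*(cyt M))*(ct M) + (ctt + cty*(cyt M) + cyy*(cyt M)^2)*(ct M)^2) + (c2y*(cyz M) + (c2t + c2y*(cyt M))*(ct M))*(c2 M) + c22*(c2 M)^2)*z^2 + (l1 + (c1y*(cyz M) + (c1t + c1y*(cyt M))*(ct M) + c12*(c2 M))*z)*((c1 M)*z+(0)) + c11*(((c1 M)*z+(0))^2+(sig1 M)^2)) \<partial>lborel) = (c0 + c11*((c1 M)^2+(sig1 M)^2) + c22*((c2 M)^2+(sig2 M)^2) + ctt*((ct M)^2+(sigt M)^2)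
   + cyy*(((cyz M)+(cyt M)*(ct M))^2 + (cyt M)^2*(sigt M)^2 + (sigy M)^2)
   + c12*((c1 M)*(c2 M)) + c1t*((c1 M)*(ct M)) + c2t*((c2 M)*(ct M))
   + c1y*((c1 M)*((cyz M)+(cyt M)*(ct M))) + c2y*((c2 M)*((cyz M)+(cyt M)*(ct M)))
   + cty*((ct M)*(cyz M) + (cyt M)*((ct M)^2+(sigt M)^2)))"
proof -
  have "(\<integral>z. (std_normal_density z * (1)) * ((c0 + cyy*(sigy M)^2 + (ctt + cty*(cyt M) + cyy*(cyt M)^2)*(sigt M)^2 + c22*(sig2 M)^2) + (ly*(cyz M) + (lt + ly*(cyt M))*(ct M) + l2*(c2 M))*z + (((cyy*(cyz M)^2) + (cty*(cyz M) + 2*cyy*(cyz M)*(cyt M))*(ct M) + (ctt + cty*(cyt M) + cyy*(cyt M)^2)*(ct M)^2) + (c2y*(cyz M) + (c2t + c2y*(cyt M))*(ct M))*(c2 M) + c22*(c2 M)^2)*z^2 + (l1 + (c1y*(cyz M) + (c1t + c1y*(cyt M))*(ct M) + c12*(c2 M))*z)*((c1 M)*z+(0)) + c11*(((c1 M)*z+(0))^2+(sig1 M)^2)) \<partial>lborel)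
     = (\<integral>z. normal_density 0 1 z * (((c0 + cyy*(sigy M)^2 + (ctt + cty*(cyt M) + cyy*(cyt M)^2)*(sigt M)^2 + c22*(sig2 M)^2) + c11*(sig1 M)^2) + ((ly*(cyz M) + (lt + ly*(cyt M))*(ct M) + l2*(c2 M)) + l1*(c1 M))*z + ((((cyy*(cyz M)^2) + (cty*(cyz M) + 2*cyy*(cyz M)*(cyt M))*(ct M) + (ctt + cty*(cyt M) + cyy*(cyt M)^2)*(ct M)^2) + (c2y*(cyz M) + (c2t + c2y*(cyt M))*(ct M))*(c2 M) + c22*(c2 M)^2) + (c1y*(cyz M) + (c1t + c1y*(cyt M))*(ct M) + c12*(c2 M))*(c1 M) + c11*(c1 M)^2)*z^2) \<partial>lborel)"
    by (intro Bochner_Integration.integral_cong refl) (simp add: algebra_simps power2_eq_square)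
  also have "\<dots> = ((c0 + cyy*(sigy M)^2 + (ctt + cty*(cyt M) + cyy*(cyt M)^2)*(sigt M)^2 + c22*(sig2 M)^2) + c11*(sig1 M)^2) + ((ly*(cyz M) + (lt + ly*(cyt M))*(ct M) + l2*(c2 M)) + l1*(c1 M))*0 + ((((cyy*(cyz M)^2) + (cty*(cyz M) + 2*cyy*(cyz M)*(cyt M))*(ct M) + (ctt + cty*(cyt M) + cyy*(cyt M)^2)*(ct M)^2) + (c2y*(cyz M) + (c2t + c2y*(cyt M))*(ct M))*(c2 M) + c22*(c2 M)^2) + (c1y*(cyz M) + (c1t + c1y*(cyt M))*(ct M) + c12*(c2 M))*(c1 M) + c11*(c1 M)^2)*(0^2+1^2)"
    by (rule has_bochner_integral_integral_eq[OF gauss_quad]) simp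
  also have "\<dots> = (c0 + c11*((c1 M)^2+(sig1 M)^2) + c22*((c2 M)^2+(sig2 M)^2) + ctt*((ct M)^2+(sigt M)^2)
   + cyy*(((cyz M)+(cyt M)*(ct M))^2 + (cyt M)^2*(sigt M)^2 + (sigy M)^2)
   + c12*((c1 M)*(c2 M)) + c1t*((c1 M)*(ct M)) + c2t*((c2 M)*(ct M))
   + c1y*((c1 M)*((cyz M)+(cyt M)*(ct M))) + c2y*((c2 M)*((cyz M)+(cyt M)*(ct M)))
   + cty*((ct M)*(cyz M) + (cyt M)*((ct M)^2+(sigt M)^2)))"
    by (simp add: algebra_simps power2_eq_square)
  finally show ?thesis .
qed

lemma pop_quad:
  assumes vm: "valid_model M"
  shows "(\<integral>x1. \<integral>x2. \<integral>t. \<integral>y. true_obs_density M x1 x2 t y * Qd c0 l1 l2 lt ly c11 c22 ctt cyy c12 c1t c1y c2t c2y cty x1 x2 t y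
        \<partial>lborel \<partial>lborel \<partial>lborel \<partial>lborel) = (c0 + c11*((c1 M)^2+(sig1 M)^2) + c22*((c2 M)^2+(sig2 M)^2) + ctt*((ct M)^2+(sigt M)^2)
   + cyy*(((cyz M)+(cyt M)*(ct M))^2 + (cyt M)^2*(sigt M)^2 + (sigy M)^2)
   + c12*((c1 M)*(c2 M)) + c1t*((c1 M)*(ct M)) + c2t*((c2 M)*(ct M))
   + c1y*((c1 M)*((cyz M)+(cyt M)*(ct M))) + c2y*((c2 M)*((cyz M)+(cyt M)*(ct M)))
   + cty*((ct M)*(cyz M) + (cyt M)*((ct M)^2+(sigt M)^2)))"
  by (simp only: lev_y[OF vm] lev_t[OF vm] lev_x2[OF vm] lev_x1[OF vm] lev_z)


lemma ln_nd:
  assumes "0 < \<sigma>"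
  shows "ln (normal_density \<mu> \<sigma> x) = - ln (sqrt (2*pi*\<sigma>^2)) - (1/(2*\<sigma>^2))*(x-\<mu>)^2"
  using assms unfolding normal_density_def by (simp add: ln_mult ln_div)

lemma dec_alg:
  fixes La Lb Lc Ld Lq Lo Wa Wb Wc Wd R Ro Ga Gb Gc Gd Ge Aa Ab Ac Ad Sq x1 x2 t y z :: real
  shows "(- La - Wa*(x1 - Ga*z)^2) + (- Lb - Wb*(x2 - Gb*z)^2) + (- Lc - Wc*(t - Gc*z)^2) + (- Ld - Wd*(y - (Gd*z + Ge*t))^2) = (- La - Lb - Lc - Ld - Wa*x1^2 - Wb*x2^2 - Wc*t^2 - Wd*(y - Ge*t)^2) + (2*Wa*x1*Ga + 2*Wb*x2*Gb + 2*Wc*t*Gc + 2*Wd*(y - Ge*t)*Gd)*z + (-(Wa*Ga^2 + Wb*Gb^2 + Wc*Gc^2 + Wd*Gd^2))*z^2"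
  by (simp add: algebra_simps power2_eq_square)

lemma kl_alg:
  fixes La Lb Lc Ld Lq Lo Wa Wb Wc Wd R Ro Ga Gb Gc Gd Ge Aa Ab Ac Ad Sq x1 x2 t y z :: real
  shows "(- Lq - R*(z - (Aa*x1 + Ab*x2 + Ac*t + Ad*y))^2) - (- Lo - Ro*(z - 0)^2) = (- Lq + Lo - R*(Aa*x1 + Ab*x2 + Ac*t + Ad*y)^2) + (2*R*(Aa*x1 + Ab*x2 + Ac*t + Ad*y))*z + (Ro - R)*z^2"
  by (simp add: algebra_simps power2_eq_square)

lemma final_alg:
  fixes La Lb Lc Ld Lq Lo Wa Wb Wc Wd R Ro Ga Gb Gc Gd Ge Aa Ab Ac Ad Sq x1 x2 t y :: real
  assumes "R * Sq^2 = 1/2" "Ro = 1/2"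
  shows "((- La - Lb - Lc - Ld - Wa*x1^2 - Wb*x2^2 - Wc*t^2 - Wd*(y - Ge*t)^2) + (2*Wa*x1*Ga + 2*Wb*x2*Gb + 2*Wc*t*Gc + 2*Wd*(y - Ge*t)*Gd)*(Aa*x1 + Ab*x2 + Ac*t + Ad*y) + (-(Wa*Ga^2 + Wb*Gb^2 + Wc*Gc^2 + Wd*Gd^2))*((Aa*x1 + Ab*x2 + Ac*t + Ad*y)^2+Sq^2)) - ((- Lq + Lo - R*(Aa*x1 + Ab*x2 + Ac*t + Ad*y)^2) + (2*R*(Aa*x1 + Ab*x2 + Ac*t + Ad*y))*(Aa*x1 + Ab*x2 + Ac*t + Ad*y) + (Ro - R)*((Aa*x1 + Ab*x2 + Ac*t + Ad*y)^2+Sq^2)) = ((- La - Lb - Lc - Ld) - (- Lq + Lo) + 1/2 - (Wa*Ga^2*Sq^2 + Wb*Gb^2*Sq^2 + Wc*Gc^2*Sq^2 + Wd*Gd^2*Sq^2) - Sq^2/2) - (Wa*((1 - Ga*Aa)*x1 + (- Ga*Ab)*x2 + (- Ga*Ac)*t + (- Ga*Ad)*y)^2 + Wb*((- Gb*Aa)*x1 + (1 - Gb*Ab)*x2 + (- Gb*Ac)*t + (- Gb*Ad)*y)^2 + Wc*((- Gc*Aa)*x1 + (- Gc*Ab)*x2 + (1 - Gc*Ac)*t + (- Gc*Ad)*y)^2 + Wd*((- Gd*Aa)*x1 + (- Gd*Ab)*x2 + (- Ge - Gd*Ac)*t + (1 - Gd*Ad)*y)^2 + (1/2)*(Aa*x1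 + Ab*x2 + Ac*t + Ad*y)^2)"
proof -
  have r: "R * (Sq * Sq) = 1/2" using assms(1) by (simp add: power2_eq_square)
  show ?thesis unfolding assms(2) by (simp add: algebra_simps power2_eq_square r)
qed

lemma elbo_cf:
  assumes vc: "valid_cevae P"
  shows "elbo P x1 x2 t y = ((- ln (sqrt (2*pi*(s1 P)^2)) - ln (sqrt (2*pi*(s2 P)^2)) - ln (sqrt (2*pi*(st P)^2)) - ln (sqrt (2*pi*(sy P)^2))) - (- ln (sqrt (2*pi*(sq P)^2)) + ln (sqrt (2*pi*1^2))) + 1/2 - ((1/(2*(s1 P)^2))*(g1 P)^2*(sq P)^2 + (1/(2*(s2 P)^2))*(g2 P)^2*(sq P)^2 + (1/(2*(st P)^2))*(gt P)^2*(sq P)^2 + (1/(2*(sy P)^2))*(gyz P)^2*(sq P)^2) - (sq P)^2/2) - ((1/(2*(s1 P)^2))*((1 - (g1 P)*(a1 P))*x1 + (- (g1 P)*(a2 P))*x2 + (- (g1 P)*(a3 P))*t + (- (g1 P)*(a4 P))*y)^2 + (1/(2*(s2 P)^2))*((- (g2 P)*(a1 P))*x1 + (1 - (g2 P)*(a2 P))*x2 + (- (g2 P)*(a3 P))*t + (- (g2 P)*(a4 P))*y)^2 + (1/(2*(st P)^2))*((- (gt P)*(a1 P))*x1 + (- (gt P)*(a2 P))*x2 + (1 - (gt P)*(a3 P))*t + (- (gt P)*(a4 P))*y)^2 + (1/(2*(sy P)^2))*((- (gyz P)*(a1 P))*x1 + (- (gyz P)*(a2 P))*x2 + (- (gyt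 P) - (gyz P)*(a3 P))*t + (1 - (gyz P)*(a4 P))*y)^2 + (1/2)*((a1 P)*x1 + (a2 P)*x2 + (a3 P)*t + (a4 P)*y)^2)"
proof -
  have p: "0 < (s1 P)" "0 < (s2 P)" "0 < (st P)" "0 < (sy P)" "0 < (sq P)" using vc unfolding valid_cevae_def by auto
  have e1: "(\<integral>z. enc P x1 x2 t y z * dec_loglik P z x1 x2 t y \<partial>lborel)
     = (\<integral>z. normal_density ((a1 P)*x1 + (a2 P)*x2 + (a3 P)*t + (a4 P)*y) (sq P) z * ((- ln (sqrt (2*pi*(s1 P)^2)) - ln (sqrt (2*pi*(s2 P)^2)) - ln (sqrt (2*pi*(st P)^2)) - ln (sqrt (2*pi*(sy P)^2)) - (1/(2*(s1 P)^2))*x1^2 - (1/(2*(s2 P)^2))*x2^2 - (1/(2*(st P)^2))*t^2 - (1/(2*(sy P)^2))*(y - (gyt P)*t)^2) + (2*(1/(2*(s1 P)^2))*x1*(g1 P) + 2*(1/(2*(s2 P)^2))*x2*(g2 P) + 2*(1/(2*(st P)^2))*t*(gt P) + 2*(1/(2*(sy P)^2))*(y - (gyt P)*t)*(gyz P))*z + (-((1/(2*(s1 P)^2))*(g1 P)^2 + (1/(2*(s2 P)^2))*(g2 P)^2 + (1/(2*(st P)^2))*(gt P)^2 + (1/(2*(sy P)^2))*(gyz P)^2))*z^2) \<partial>lborel)"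
  proof (intro Bochner_Integration.integral_cong refl)
    fix z
    have "dec_loglik P z x1 x2 t y = (- ln (sqrt (2*pi*(s1 P)^2)) - ln (sqrt (2*pi*(s2 P)^2)) - ln (sqrt (2*pi*(st P)^2)) - ln (sqrt (2*pi*(sy P)^2)) - (1/(2*(s1 P)^2))*x1^2 - (1/(2*(s2 P)^2))*x2^2 - (1/(2*(st P)^2))*t^2 - (1/(2*(sy P)^2))*(y - (gyt P)*t)^2) + (2*(1/(2*(s1 P)^2))*x1*(g1 P) + 2*(1/(2*(s2 P)^2))*x2*(g2 P) + 2*(1/(2*(st P)^2))*t*(gt P) + 2*(1/(2*(sy P)^2))*(y - (gyt P)*t)*(gyz P))*z + (-((1/(2*(s1 P)^2))*(g1 P)^2 + (1/(2*(s2 P)^2))*(g2 P)^2 + (1/(2*(st P)^2))*(gt P)^2 + (1/(2*(sy P)^2))*(gyz P)^2))*z^2"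
      unfolding dec_loglik_def ln_nd[OF p(1)] ln_nd[OF p(2)] ln_nd[OF p(3)] ln_nd[OF p(4)]
      by (rule dec_alg)
    thus "enc P x1 x2 t y z * dec_loglik P z x1 x2 t y = normal_density ((a1 P)*x1 + (a2 P)*x2 + (a3 P)*t + (a4 P)*y) (sq P) z * ((- ln (sqrt (2*pi*(s1 P)^2)) - ln (sqrt (2*pi*(s2 P)^2)) - ln (sqrt (2*pi*(st P)^2)) - ln (sqrt (2*pi*(sy P)^2)) - (1/(2*(s1 P)^2))*x1^2 - (1/(2*(s2 P)^2))*x2^2 - (1/(2*(st P)^2))*t^2 - (1/(2*(sy P)^2))*(y - (gyt P)*t)^2) + (2*(1/(2*(s1 P)^2))*x1*(g1 P) + 2*(1/(2*(s2 P)^2))*x2*(g2 P) + 2*(1/(2*(st P)^2))*t*(gt P) + 2*(1/(2*(sy P)^2))*(y - (gyt P)*t)*(gyz P))*z + (-((1/(2*(s1 P)^2))*(g1 P)^2 + (1/(2*(s2 P)^2))*(g2 P)^2 + (1/(2*(st P)^2))*(gt P)^2 + (1/(2*(sy P)^2))*(gyz P)^2))*z^2)"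
      unfolding enc_def by simp
  qed
  have e2: "enc_KL P x1 x2 t y = (\<integral>z. normal_density ((a1 P)*x1 + (a2 P)*x2 + (a3 P)*t + (a4 P)*y) (sq P) z * ((- ln (sqrt (2*pi*(sq P)^2)) + ln (sqrt (2*pi*1^2)) - (1/(2*(sq P)^2))*((a1 P)*x1 + (a2 P)*x2 + (a3 P)*t + (a4 P)*y)^2) + (2*(1/(2*(sq P)^2))*((a1 P)*x1 + (a2 P)*x2 + (a3 P)*t + (a4 P)*y))*z + ((1/(2*1^2)) - (1/(2*(sq P)^2)))*z^2) \<partial>lborel)"
    unfolding enc_KL_def enc_def
  proof (intro Bochner_Integration.integral_cong refl)
    fix z
    have "ln (normal_density ((a1 P)*x1 + (a2 P)*x2 + (a3 P)*t + (a4 P)*y) (sq P) z / std_normal_density z) = ln (normal_density ((a1 P)*x1 + (a2 P)*x2 + (a3 P)*t + (a4 P)*y) (sq P) z) - ln (std_normal_density z)"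
      using p by (intro ln_divide_pos) (simp_all add: normal_density_pos)
    also have "\<dots> = (- ln (sqrt (2*pi*(sq P)^2)) + ln (sqrt (2*pi*1^2)) - (1/(2*(sq P)^2))*((a1 P)*x1 + (a2 P)*x2 + (a3 P)*t + (a4 P)*y)^2) + (2*(1/(2*(sq P)^2))*((a1 P)*x1 + (a2 P)*x2 + (a3 P)*t + (a4 P)*y))*z + ((1/(2*1^2)) - (1/(2*(sq P)^2)))*z^2"
      unfolding ln_nd[OF p(5)] ln_nd[of 1, OF zero_less_one] by (rule kl_alg)
    finally show "normal_density ((a1 P)*x1 + (a2 P)*x2 + (a3 P)*t + (a4 P)*y) (sq P) z * ln (normal_density ((a1 P)*x1 + (a2 P)*x2 + (a3 P)*t + (a4 P)*y) (sq P) z / std_normal_density z) = normal_density ((a1 P)*x1 + (a2 P)*x2 + (a3 P)*t + (a4 P)*y) (sq P) z * ((- ln (sqrt (2*pi*(sq P)^2)) + ln (sqrt (2*pi*1^2)) - (1/(2*(sq P)^2))*((a1 P)*x1 + (a2 P)*x2 + (a3 P)*t + (a4 P)*y)^2) + (2*(1/(2*(sq P)^2))*((a1 P)*x1 + (a2 P)*x2 + (a3 P)*t + (a4 P)*y))*z + ((1/(2*1^2)) - (1/(2*(sq P)^2)))*z^2)" by simp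
  qed
  have rq: "(1/(2*(sq P)^2)) * (sq P)^2 = 1/2" using p by simp
  have ro: "(1/(2*1^2)) = (1/2::real)" by simp
  have "elbo P x1 x2 t y = ((- ln (sqrt (2*pi*(s1 P)^2)) - ln (sqrt (2*pi*(s2 P)^2)) - ln (sqrt (2*pi*(st P)^2)) - ln (sqrt (2*pi*(sy P)^2)) - (1/(2*(s1 P)^2))*x1^2 - (1/(2*(s2 P)^2))*x2^2 - (1/(2*(st P)^2))*t^2 - (1/(2*(sy P)^2))*(y - (gyt P)*t)^2) + (2*(1/(2*(s1 P)^2))*x1*(g1 P) + 2*(1/(2*(s2 P)^2))*x2*(g2 P) + 2*(1/(2*(st P)^2))*t*(gt P) + 2*(1/(2*(sy P)^2))*(y - (gyt P)*t)*(gyz P))*((a1 P)*x1 + (a2 P)*x2 + (a3 P)*t + (a4 P)*y) + (-((1/(2*(s1 P)^2))*(g1 P)^2 + (1/(2*(s2 P)^2))*(g2 P)^2 + (1/(2*(st P)^2))*(gt P)^2 + (1/(2*(sy P)^2))*(gyz P)^2))*(((a1 P)*x1 + (a2 P)*x2 + (a3 P)*t + (a4 P)*y)^2+(sq P)^2)) - ((- ln (sqrt (2*pi*(sq P)^2)) + ln (sqrt (2*pi*1^2)) - (1/(2*(sq P)^2))*((a1 P)*x1 + (a2 P)*x2 + (a3 P)*t + (a4 P)*y)^2) + (2*(1/(2*(sq P)^2))*((a1 P)*x1 + (a2 P)*x2 + (a3 P)*t + (a4 P)*y))*((a1 P)*x1 + (a2 P)*x2 + (a3 P)*t + (a4 P)*y)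 + ((1/(2*1^2)) - (1/(2*(sq P)^2)))*(((a1 P)*x1 + (a2 P)*x2 + (a3 P)*t + (a4 P)*y)^2+(sq P)^2))"
    unfolding elbo_def e1 e2
    by (simp only: has_bochner_integral_integral_eq[OF gauss_quad[OF p(5)]])
  also have "\<dots> = ((- ln (sqrt (2*pi*(s1 P)^2)) - ln (sqrt (2*pi*(s2 P)^2)) - ln (sqrt (2*pi*(st P)^2)) - ln (sqrt (2*pi*(sy P)^2))) - (- ln (sqrt (2*pi*(sq P)^2)) + ln (sqrt (2*pi*1^2))) + 1/2 - ((1/(2*(s1 P)^2))*(g1 P)^2*(sq P)^2 + (1/(2*(s2 P)^2))*(g2 P)^2*(sq P)^2 + (1/(2*(st P)^2))*(gt P)^2*(sq P)^2 + (1/(2*(sy P)^2))*(gyz P)^2*(sq P)^2) - (sq P)^2/2) - ((1/(2*(s1 P)^2))*((1 - (g1 P)*(a1 P))*x1 + (- (g1 P)*(a2 P))*x2 + (- (g1 P)*(a3 P))*t + (- (g1 P)*(a4 P))*y)^2 + (1/(2*(s2 P)^2))*((- (g2 P)*(a1 P))*x1 + (1 - (g2 P)*(a2 P))*x2 + (- (g2 P)*(a3 P))*t + (- (g2 P)*(a4 P))*y)^2 + (1/(2*(st P)^2))*((- (gt P)*(a1 P))*x1 + (- (gt P)*(a2 P))*x2 + (1 - (gt P)*(a3 P))*t + (- (gt P)*(a4 P))*y)^2 + (1/(2*(sy P)^2))*((- (gyz P)*(a1 P))*x1 + (- (gyz P)*(a2 P))*x2 + (- (gyt P) - (gyz P)*(a3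 P))*t + (1 - (gyz P)*(a4 P))*y)^2 + (1/2)*((a1 P)*x1 + (a2 P)*x2 + (a3 P)*t + (a4 P)*y)^2)"
    by (rule final_alg[OF rq ro])
  finally show ?thesis .
qed


definition quadM :: "true_model \<Rightarrow> real \<Rightarrow> real \<Rightarrow> real \<Rightarrow> real \<Rightarrow> real" where
  "quadM M ea eb ec ed = (0 + ea^2*((c1 M)^2+(sig1 M)^2) + eb^2*((c2 M)^2+(sig2 M)^2) + ec^2*((ct M)^2+(sigt M)^2)
   + ed^2*(((cyz M)+(cyt M)*(ct M))^2 + (cyt M)^2*(sigt M)^2 + (sigy M)^2)
   + 2*ea*eb*((c1 M)*(c2 M)) + 2*ea*ec*((c1 M)*(ct M)) + 2*eb*ec*((c2 M)*(ct M))
   + 2*ea*ed*((c1 M)*((cyz M)+(cyt M)*(ct M))) + 2*eb*ed*((c2 M)*((cyz M)+(cyt M)*(ct M)))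
   + 2*ec*ed*((ct M)*(cyz M) + (cyt M)*((ct M)^2+(sigt M)^2)))"

lemma pop_sq:
  assumes vm: "valid_model M"
  shows "(\<integral>x1. \<integral>x2. \<integral>t. \<integral>y. true_obs_density M x1 x2 t y * (c0 - (w1*(e1a*x1 + e1b*x2 + e1c*t + e1d*y)^2 + w2*(e2a*x1 + e2b*x2 + e2c*t + e2d*y)^2 + w3*(e3a*x1 + e3b*x2 + e3c*t + e3d*y)^2 + w4*(e4a*x1 + e4b*x2 + e4c*t + e4d*y)^2 + w5*(e5a*x1 + e5b*x2 + e5c*t + e5d*y)^2))
        \<partial>lborel \<partial>lborel \<partial>lborel \<partial>lborel) = c0 - (w1*quadM M e1a e1b e1c e1d + w2*quadM M e2a e2b e2c e2d + w3*quadM M e3a e3b e3c e3d + w4*quadM M e4a e4b e4c e4d + w5*quadM M e5a e5b e5c e5d)"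
proof -
  have eq: "c0 - (w1*(e1a*x1 + e1b*x2 + e1c*t + e1d*y)^2 + w2*(e2a*x1 + e2b*x2 + e2c*t + e2d*y)^2 + w3*(e3a*x1 + e3b*x2 + e3c*t + e3d*y)^2 + w4*(e4a*x1 + e4b*x2 + e4c*t + e4d*y)^2 + w5*(e5a*x1 + e5b*x2 + e5c*t + e5d*y)^2) = Qd c0 0 0 0 0 (-(w1*e1a^2 + w2*e2a^2 + w3*e3a^2 + w4*e4a^2 + w5*e5a^2)) (-(w1*e1b^2 + w2*e2b^2 + w3*e3b^2 + w4*e4b^2 + w5*e5b^2)) (-(w1*e1c^2 + w2*e2c^2 + w3*e3c^2 + w4*e4c^2 + w5*e5c^2)) (-(w1*e1d^2 + w2*e2d^2 + w3*e3d^2 + w4*e4d^2 + w5*e5d^2)) (-(2*w1*e1a*e1b + 2*w2*e2a*e2b + 2*w3*e3a*e3b + 2*w4*e4a*e4b + 2*w5*e5a*e5b)) (-(2*w1*e1a*e1c + 2*w2*e2a*e2c + 2*w3*e3a*e3c + 2*w4*e4a*e4c + 2*w5*e5a*e5c)) (-(2*w1*e1a*e1d + 2*w2*e2a*e2d + 2*w3*e3a*e3d + 2*w4*e4a*e4d + 2*w5*e5a*e5d)) (-(2*w1*e1b*e1c + 2*w2*e2b*e2c + 2*w3*e3b*e3c + 2*w4*e4b*e4c + 2*w5*e5b*e5c)) (-(2*w1*e1b*e1d + 2*w2*e2b*e2d + 2*w3*e3b*e3d + 2*w4*e4b*e4d + 2*w5*e5b*e5d)) (-(2*w1*e1c*e1d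 + 2*w2*e2c*e2d + 2*w3*e3c*e3d + 2*w4*e4c*e4d + 2*w5*e5c*e5d)) x1 x2 t y" for x1 x2 t y
    unfolding Qd_def by (simp add: algebra_simps power2_eq_square)
  show ?thesis unfolding eq pop_quad[OF vm] quadM_def by (simp add: algebra_simps)
qed


definition det3 :: "real \<Rightarrow> real \<Rightarrow> real \<Rightarrow> real \<Rightarrow> real \<Rightarrow> real \<Rightarrow> real" where
  "det3 m11 m22 mtt m12 m1t m2t = m11*(m22*mtt-m2t^2) - m12*(m12*mtt-m2t*m1t) + m1t*(m12*m2t-m22*m1t)"

definition qa3 :: "real \<Rightarrow> real \<Rightarrow> real \<Rightarrow> real \<Rightarrow> real \<Rightarrow> real \<Rightarrow> real \<Rightarrow> real \<Rightarrow> real \<Rightarrow> real" where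
  "qa3 m11 m22 mtt m12 m1t m2t p1 p2 p3 =
     (m22*mtt-m2t^2)*p1^2 + (m11*mtt-m1t^2)*p2^2 + (m11*m22-m12^2)*p3^2
     + 2*(-(m12*mtt-m1t*m2t))*p1*p2 + 2*(m12*m2t-m22*m1t)*p1*p3 + 2*(-(m11*m2t-m12*m1t))*p2*p3"

definition bord :: "real \<Rightarrow> real \<Rightarrow> real \<Rightarrow> real \<Rightarrow> real \<Rightarrow> real \<Rightarrow> real \<Rightarrow> real \<Rightarrow> real \<Rightarrow> real \<Rightarrow> real \<Rightarrow> real" where
  "bord m11 m22 mtt myy m12 m1t m1y m2t m2y mty d =
     (myy + 2*d*mty + d^2*mtt) * det3 m11 m22 mtt m12 m1t m2t
     - qa3 m11 m22 mtt m12 m1t m2t (m1y + d*m1t) (m2y + d*m2t) (mty + d*mtt)"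

lemma S2_id: "mtt*(m11*m22 - m12^2) - det3 m11 m22 mtt m12 m1t m2t = m22*m1t^2 - 2*m12*m1t*m2t + m11*m2t^2"
  unfolding det3_def by (simp add: algebra_simps power2_eq_square)

lemma bord_inv: "bord m11 m22 mtt myy m12 m1t m1y m2t m2y mty d = bord m11 m22 mtt myy m12 m1t m1y m2t m2y mty 0"
  unfolding bord_def det3_def qa3_def by (simp add: algebra_simps power2_eq_square)

text \<open>adj * M * adj = det * adj, as a quadratic form\<close>
lemma adj_id:
  fixes m11 m22 mtt m12 m1t m2t p1 p2 p3 :: real
  defines "\<tau>1 \<equiv> (m22*mtt-m2t^2)*p1 + (-(m12*mtt-m1t*m2t))*p2 + (m12*m2t-m22*m1t)*p3"
    and "\<tau>2 \<equiv> (-(m12*mtt-m1t*m2t))*p1 + (m11*mtt-m1t^2)*p2 + (-(m11*m2t-m12*m1t))*p3"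
    and "\<tau>3 \<equiv> (m12*m2t-m22*m1t)*p1 + (-(m11*m2t-m12*m1t))*p2 + (m11*m22-m12^2)*p3"
  shows "m11*\<tau>1^2 + m22*\<tau>2^2 + mtt*\<tau>3^2 + 2*m12*\<tau>1*\<tau>2 + 2*m1t*\<tau>1*\<tau>3 + 2*m2t*\<tau>2*\<tau>3
       = det3 m11 m22 mtt m12 m1t m2t * qa3 m11 m22 mtt m12 m1t m2t p1 p2 p3"
  and "m11*\<tau>1 + m12*\<tau>2 + m1t*\<tau>3 = det3 m11 m22 mtt m12 m1t m2t * p1"
  and "m12*\<tau>1 + m22*\<tau>2 + m2t*\<tau>3 = det3 m11 m22 mtt m12 m1t m2t * p2"
  and "m1t*\<tau>1 + m2t*\<tau>2 + mtt*\<tau>3 = det3 m11 m22 mtt m12 m1t m2t * p3"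
  unfolding \<tau>1_def \<tau>2_def \<tau>3_def det3_def qa3_def by (simp_all add: algebra_simps power2_eq_square)


lemma det_id:
  "bord (1+l1^2-b1^2) (1+l2^2-b2^2) (1+l3^2-b3^2) (1+l4^2-b4^2) (l1*l2-b1*b2) (l1*l3-b1*b3) (l1*l4-b1*b4)
     (l2*l3-b2*b3) (l2*l4-b2*b4) (l3*l4-b3*b4) 0
   = (1 + l1^2+l2^2+l3^2+l4^2)*(1 - (b1^2+b2^2+b3^2+b4^2)) + (l1*b1+l2*b2+l3*b3+l4*b4)^2"
  unfolding bord_def det3_def qa3_def by (simp add: algebra_simps power2_eq_square)

lemma D_id:
  fixes l1 l2 l3 l4 q1 q2 q3 q4 S :: real
  defines "\<alpha> \<equiv> l1*q1+l2*q2+l3*q3+l4*q4"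
  defines "u \<equiv> \<alpha>^2+q1^2+q2^2+q3^2+q4^2+S"
  shows "(1 + l1^2+l2^2+l3^2+l4^2)*(u - ((l1*\<alpha>+q1)^2+(l2*\<alpha>+q2)^2+(l3*\<alpha>+q3)^2+(l4*\<alpha>+q4)^2))
      + (l1*(l1*\<alpha>+q1)+l2*(l2*\<alpha>+q2)+l3*(l3*\<alpha>+q3)+l4*(l4*\<alpha>+q4))^2 = S*(1 + l1^2+l2^2+l3^2+l4^2)"
proof -
  define L where "L = l1^2+l2^2+l3^2+l4^2"
  define Q where "Q = q1^2+q2^2+q3^2+q4^2"
  have e1: "(l1*\<alpha>+q1)^2+(l2*\<alpha>+q2)^2+(l3*\<alpha>+q3)^2+(l4*\<alpha>+q4)^2 = \<alpha>^2*L + 2*\<alpha>*(l1*q1+l2*q2+l3*q3+l4*q4) + Q"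
    unfolding L_def Q_def by (simp add: power2_sum algebra_simps power_mult_distrib)
  have e2: "l1*(l1*\<alpha>+q1)+l2*(l2*\<alpha>+q2)+l3*(l3*\<alpha>+q3)+l4*(l4*\<alpha>+q4) = \<alpha>*L + (l1*q1+l2*q2+l3*q3+l4*q4)"
    unfolding L_def by (simp add: algebra_simps power2_eq_square)
  have u: "u = \<alpha>^2 + Q + S" unfolding u_def Q_def by simp
  have e3: "1 + l1^2+l2^2+l3^2+l4^2 = 1 + L" unfolding L_def by simp
  show ?thesis unfolding e1 e2 e3 u \<alpha>_def[symmetric]
    by (simp add: algebra_simps power2_eq_square)
qed
lemma lagrange5:
  fixes a0 a1 a2 a3 a4 b0 b1 b2 b3 b4 :: real
  shows "(a0*b0+a1*b1+a2*b2+a3*b3+a4*b4)^2 \<le> (a0^2+a1^2+a2^2+a3^2+a4^2)*(b0^2+b1^2+b2^2+b3^2+b4^2)"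
proof -
  have "(a0^2+a1^2+a2^2+a3^2+a4^2)*(b0^2+b1^2+b2^2+b3^2+b4^2) - (a0*b0+a1*b1+a2*b2+a3*b3+a4*b4)^2
    = (a0*b1-a1*b0)^2 + (a0*b2-a2*b0)^2 + (a0*b3-a3*b0)^2 + (a0*b4-a4*b0)^2
    + (a1*b2-a2*b1)^2 + (a1*b3-a3*b1)^2 + (a1*b4-a4*b1)^2
    + (a2*b3-a3*b2)^2 + (a2*b4-a4*b2)^2 + (a3*b4-a4*b3)^2"
    by (simp add: algebra_simps power2_eq_square)
  moreover have "0 \<le> (a0*b1-a1*b0)^2 + (a0*b2-a2*b0)^2 + (a0*b3-a3*b0)^2 + (a0*b4-a4*b0)^2
    + (a1*b2-a2*b1)^2 + (a1*b3-a3*b1)^2 + (a1*b4-a4*b1)^2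
    + (a2*b3-a3*b2)^2 + (a2*b4-a4*b2)^2 + (a3*b4-a4*b3)^2" by simp
  ultimately show ?thesis by linarith
qed

lemma pd_form:
  fixes l1 l2 l3 l4 q1 q2 q3 q4 S t1 t2 t3 t4 :: real
  defines "\<alpha> \<equiv> l1*q1+l2*q2+l3*q3+l4*q4"
  defines "u \<equiv> \<alpha>^2+q1^2+q2^2+q3^2+q4^2+S"
  defines "T \<equiv> t1^2+t2^2+t3^2+t4^2 + (l1*t1+l2*t2+l3*t3+l4*t4)^2"
  shows "S*T \<le> u*T - ((l1*\<alpha>+q1)*t1+(l2*\<alpha>+q2)*t2+(l3*\<alpha>+q3)*t3+(l4*\<alpha>+q4)*t4)^2"
proof -
  have e: "(l1*\<alpha>+q1)*t1+(l2*\<alpha>+q2)*t2+(l3*\<alpha>+q3)*t3+(l4*\<alpha>+q4)*t4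
     = \<alpha>*(l1*t1+l2*t2+l3*t3+l4*t4) + q1*t1+q2*t2+q3*t3+q4*t4" by (simp add: algebra_simps)
  have "(\<alpha>*(l1*t1+l2*t2+l3*t3+l4*t4) + q1*t1+q2*t2+q3*t3+q4*t4)^2 \<le> (\<alpha>^2+q1^2+q2^2+q3^2+q4^2)*T"
    using lagrange5[of \<alpha> "l1*t1+l2*t2+l3*t3+l4*t4" q1 t1 q2 t2 q3 t3 q4 t4] unfolding T_def by (simp add: algebra_simps)
  moreover have "u*T = (\<alpha>^2+q1^2+q2^2+q3^2+q4^2)*T + S*T" unfolding u_def by (simp add: algebra_simps)
  ultimately show ?thesis unfolding e by linarith
qed


lemma prod_strict_aux:
  fixes x y :: real
  assumes "0 < y" "y \<le> x" "0 < k" "k * x = k * y" shows "x = y"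
  using assms by simp

lemma scale_id: fixes v b1 b2 b3 b4 l1 l2 l3 l4 :: real shows
  "v^2 * ((1 + l1^2+l2^2+l3^2+l4^2)*(1 - (b1^2+b2^2+b3^2+b4^2)) + (l1*b1+l2*b2+l3*b3+l4*b4)^2)
   = (1 + l1^2+l2^2+l3^2+l4^2)*(v^2 - ((b1 * v)^2+(b2 * v)^2+(b3 * v)^2+(b4 * v)^2)) + (l1*(b1 * v)+l2*(b2 * v)+l3*(b3 * v)+l4*(b4 * v))^2"
  by (simp add: algebra_simps power2_eq_square)

lemma key:
  fixes l1 l2 l3 l4 q1 q2 q3 q4 S h1 h2 h3 h4 d :: real
  assumes nz: "l1 \<noteq> 0" "l2 \<noteq> 0" "l3 \<noteq> 0" and S0: "0 < S"
  defines "\<alpha> \<equiv> l1*q1+l2*q2+l3*q3+l4*q4"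
  defines "u \<equiv> \<alpha>^2+q1^2+q2^2+q3^2+q4^2+S"
  defines "cc1 \<equiv> l1*\<alpha>+q1" and "cc2 \<equiv> l2*\<alpha>+q2" and "cc3 \<equiv> l3*\<alpha>+q3" and "cc4 \<equiv> l4*\<alpha>+q4"
  defines "N1 \<equiv> 1 + l1^2 - 2*h1*cc1 + h1^2*u"
    and "N2 \<equiv> 1 + l2^2 - 2*h2*cc2 + h2^2*u"
    and "N3 \<equiv> 1 + l3^2 - 2*h3*cc3 + h3^2*u"
    and "N4 \<equiv> (1+l4^2) + 2*d*l4*l3 + d^2*(1+l3^2) - 2*h4*(cc4 + d*cc3) + h4^2*u"
  shows "0 < u \<and> 0 < N1 \<and> 0 < N2 \<and> 0 < N3 \<and> 0 < N4 \<and>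
         S*(1 + l1^2+l2^2+l3^2+l4^2) \<le> u*(N1*N2*N3*N4) \<and>
         (u*(N1*N2*N3*N4) = S*(1 + l1^2+l2^2+l3^2+l4^2) \<longrightarrow> d = 0 \<and> h4^2*u = l4^2 \<and> N4 = 1)"
proof -
  have u0: "0 < u" unfolding u_def using S0 by (simp add: add_nonneg_pos)
  define v where "v = sqrt u"
  have v0: "0 < v" unfolding v_def using u0 by simp
  have vv: "v^2 = u" unfolding v_def using u0 by simp
  define b1 where "b1 = cc1 / v"
  define b2 where "b2 = cc2 / v"
  define b3 where "b3 = cc3 / v"
  define b4 where "b4 = cc4 / v"
  have cb: "cc1 = b1 * v" "cc2 = b2 * v" "cc3 = b3 * v" "cc4 = b4 * v"
    unfolding b1_def b2_def b3_def b4_def using v0 by simp_all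
  define m11 where "m11 = 1+l1^2-b1^2"
  define m22 where "m22 = 1+l2^2-b2^2"
  define m33 where "m33 = 1+l3^2-b3^2"
  define m44 where "m44 = 1+l4^2-b4^2"
  define m12 where "m12 = l1*l2-b1*b2"
  define m13 where "m13 = l1*l3-b1*b3"
  define m14 where "m14 = l1*l4-b1*b4"
  define m23 where "m23 = l2*l3-b2*b3"
  define m24 where "m24 = l2*l4-b2*b4"
  define m34 where "m34 = l3*l4-b3*b4"
  define frm where "frm = (\<lambda>t1 t2 t3 t4::real. t1^2+t2^2+t3^2+t4^2 + (l1*t1+l2*t2+l3*t3+l4*t4)^2 - (b1*t1+b2*t2+b3*t3+b4*t4)^2)"
  have frm_m: "frm t1 t2 t3 t4 = m11*t1^2+m22*t2^2+m33*t3^2+m44*t4^2 + 2*m12*t1*t2 + 2*m13*t1*t3 + 2*m14*t1*t4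
      + 2*m23*t2*t3 + 2*m24*t2*t4 + 2*m34*t3*t4" for t1 t2 t3 t4
    unfolding frm_def m11_def m22_def m33_def m44_def m12_def m13_def m14_def m23_def m24_def m34_def
    by (simp add: algebra_simps power2_eq_square)
  have frm_pd: "S*(t1^2+t2^2+t3^2+t4^2 + (l1*t1+l2*t2+l3*t3+l4*t4)^2) \<le> u * frm t1 t2 t3 t4" for t1 t2 t3 t4
  proof -
    have e: "(b1*t1+b2*t2+b3*t3+b4*t4)^2 * u = (cc1*t1+cc2*t2+cc3*t3+cc4*t4)^2"
      unfolding cb vv[symmetric] by (simp add: algebra_simps power2_eq_square)
    have "u * frm t1 t2 t3 t4 = u*(t1^2+t2^2+t3^2+t4^2 + (l1*t1+l2*t2+l3*t3+l4*t4)^2) - (cc1*t1+cc2*t2+cc3*t3+cc4*t4)^2"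
      unfolding frm_def e[symmetric] by (simp add: algebra_simps)
    moreover have "S*(t1^2+t2^2+t3^2+t4^2 + (l1*t1+l2*t2+l3*t3+l4*t4)^2) \<le> u*(t1^2+t2^2+t3^2+t4^2 + (l1*t1+l2*t2+l3*t3+l4*t4)^2) - (cc1*t1+cc2*t2+cc3*t3+cc4*t4)^2"
      using pd_form[where S=S and ?t1.0=t1 and ?t2.0=t2 and ?t3.0=t3 and ?t4.0=t4 and ?l1.0=l1 and ?l2.0=l2 and ?l3.0=l3 and ?l4.0=l4 and ?q1.0=q1 and ?q2.0=q2 and ?q3.0=q3 and ?q4.0=q4]
      unfolding \<alpha>_def[symmetric] cc1_def[symmetric] cc2_def[symmetric] cc3_def[symmetric] cc4_def[symmetric] u_def[symmetric] .
    ultimately show ?thesis by simp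
  qed
  have frm_pos: "0 < frm t1 t2 t3 t4" if "t1 \<noteq> 0 \<or> t2 \<noteq> 0 \<or> t3 \<noteq> 0 \<or> t4 \<noteq> 0" for t1 t2 t3 t4
  proof -
    have "0 < t1^2+t2^2+t3^2+t4^2" using that by (auto simp: add_pos_nonneg add_nonneg_pos)
    hence "0 < t1^2+t2^2+t3^2+t4^2 + (l1*t1+l2*t2+l3*t3+l4*t4)^2" by (simp add: add_pos_nonneg)
    hence "0 < S*(t1^2+t2^2+t3^2+t4^2 + (l1*t1+l2*t2+l3*t3+l4*t4)^2)" using S0 by simp
    hence "0 < u * frm t1 t2 t3 t4" using frm_pd[of t1 t2 t3 t4] by linarith
    thus ?thesis using u0 by (simp add: zero_less_mult_iff)
  qed
  have frm_nn: "0 \<le> frm t1 t2 t3 t4" for t1 t2 t3 t4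
    using frm_pos[of t1 t2 t3 t4] by (cases "t1 \<noteq> 0 \<or> t2 \<noteq> 0 \<or> t3 \<noteq> 0 \<or> t4 \<noteq> 0") (auto simp: frm_def)
  have m11p: "0 < m11" using frm_pos[of 1 0 0 0] frm_m[of 1 0 0 0] by simp
  have m22p: "0 < m22" using frm_pos[of 0 1 0 0] frm_m[of 0 1 0 0] by simp
  have m33p: "0 < m33" using frm_pos[of 0 0 1 0] frm_m[of 0 0 1 0] by simp
  define Gxx where "Gxx = m44 + 2*d*m34 + d^2*m33"
  have Gp: "0 < Gxx" using frm_pos[of 0 0 d 1] frm_m[of 0 0 d 1] unfolding Gxx_def by (simp add: algebra_simps power2_eq_square)
  define E2 where "E2 = m11*m22 - m12^2"
  have "m11*E2 = frm (-m12) m11 0 0" unfolding frm_m E2_def by (simp add: algebra_simps power2_eq_square)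
  hence E2p: "0 < E2" using frm_pos[of "-m12" m11 0 0] m11p by (metis zero_less_mult_iff order_less_asym)
  define E3 where "E3 = det3 m11 m22 m33 m12 m13 m23"
  define z1 where "z1 = (m22*m33-m23^2)*0 + (-(m12*m33-m13*m23))*0 + (m12*m23-m22*m13)*(1::real)"
  define z2 where "z2 = (-(m12*m33-m13*m23))*0 + (m11*m33-m13^2)*0 + (-(m11*m23-m12*m13))*(1::real)"
  define z3 where "z3 = (m12*m23-m22*m13)*0 + (-(m11*m23-m12*m13))*0 + (m11*m22-m12^2)*(1::real)"
  have "m11*z1^2 + m22*z2^2 + m33*z3^2 + 2*m12*z1*z2 + 2*m13*z1*z3 + 2*m23*z2*z3
       = det3 m11 m22 m33 m12 m13 m23 * qa3 m11 m22 m33 m12 m13 m23 0 0 1"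
    unfolding z1_def z2_def z3_def
    by (rule adj_id(1)[where ?m11.0=m11 and ?m22.0=m22 and mtt=m33 and ?m12.0=m12 and m1t=m13 and m2t=m23 and ?p1.0=0 and ?p2.0=0 and ?p3.0=1])
  hence "frm z1 z2 z3 0 = E3 * E2" unfolding frm_m E3_def E2_def qa3_def by simp
  moreover have z3E: "z3 = E2" unfolding z3_def E2_def by simp
  ultimately have Ez: "E3 * E2 = frm z1 z2 z3 0" by simp
  have "0 < frm z1 z2 z3 0" using frm_pos[of z1 z2 z3 0] z3E E2p by simp
  hence "0 < E3 * E2" using Ez by simp
  hence E3p: "0 < E3" using E2p by (metis zero_less_mult_iff order_less_asym)
  have N1e: "N1 = m11 + (h1 * v - b1)^2" unfolding N1_def m11_def cb vv[symmetric] by (simp add: algebra_simps power2_eq_square)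
  have N2e: "N2 = m22 + (h2 * v - b2)^2" unfolding N2_def m22_def cb vv[symmetric] by (simp add: algebra_simps power2_eq_square)
  have N3e: "N3 = m33 + (h3 * v - b3)^2" unfolding N3_def m33_def cb vv[symmetric] by (simp add: algebra_simps power2_eq_square)
  have N4e: "N4 = Gxx + (h4 * v - (b4 + d*b3))^2"
    unfolding N4_def Gxx_def m44_def m34_def m33_def cb vv[symmetric] by (simp add: algebra_simps power2_eq_square)
  have N1g: "m11 \<le> N1" and N2g: "m22 \<le> N2" and N3g: "m33 \<le> N3" and N4g: "Gxx \<le> N4"
    using N1e N2e N3e N4e by simp_all
  have Np: "0 < N1" "0 < N2" "0 < N3" "0 < N4" using N1g N2g N3g N4g m11p m22p m33p Gp by linarith+
  define E4 where "E4 = bord m11 m22 m33 m44 m12 m13 m14 m23 m24 m34 d"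
  have uE4: "u * E4 = S*(1 + l1^2+l2^2+l3^2+l4^2)"
  proof -
    have "E4 = (1 + l1^2+l2^2+l3^2+l4^2)*(1 - (b1^2+b2^2+b3^2+b4^2)) + (l1*b1+l2*b2+l3*b3+l4*b4)^2"
      unfolding E4_def bord_inv[of _ _ _ _ _ _ _ _ _ _ d]
      unfolding m11_def m22_def m33_def m44_def m12_def m13_def m14_def m23_def m24_def m34_def
      by (rule det_id)
    hence "u*E4 = (1 + l1^2+l2^2+l3^2+l4^2)*(u - (cc1^2+cc2^2+cc3^2+cc4^2)) + (l1*cc1+l2*cc2+l3*cc3+l4*cc4)^2"
      unfolding vv[symmetric] cb by (simp only: scale_id)
    also have "\<dots> = S*(1 + l1^2+l2^2+l3^2+l4^2)"
      unfolding cc1_def cc2_def cc3_def cc4_def u_def \<alpha>_def by (rule D_id)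
    finally show ?thesis .
  qed
  define p1 where "p1 = m14 + d*m13"
  define p2 where "p2 = m24 + d*m23"
  define p3 where "p3 = m34 + d*m33"
  define qg where "qg = qa3 m11 m22 m33 m12 m13 m23 p1 p2 p3"
  have G3: "Gxx * E3 = E4 + qg"
    unfolding Gxx_def E3_def E4_def qg_def bord_def p1_def p2_def p3_def by simp
  define w1 where "w1 = (m22*m33-m23^2)*p1 + (-(m12*m33-m13*m23))*p2 + (m12*m23-m22*m13)*p3"
  define w2 where "w2 = (-(m12*m33-m13*m23))*p1 + (m11*m33-m13^2)*p2 + (-(m11*m23-m12*m13))*p3"
  define w3 where "w3 = (m12*m23-m22*m13)*p1 + (-(m11*m23-m12*m13))*p2 + (m11*m22-m12^2)*p3"
  have "m11*w1^2 + m22*w2^2 + m33*w3^2 + 2*m12*w1*w2 + 2*m13*w1*w3 + 2*m23*w2*w3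
       = det3 m11 m22 m33 m12 m13 m23 * qa3 m11 m22 m33 m12 m13 m23 p1 p2 p3"
    unfolding w1_def w2_def w3_def
    by (rule adj_id(1)[where ?m11.0=m11 and ?m22.0=m22 and mtt=m33 and ?m12.0=m12 and m1t=m13 and m2t=m23 and ?p1.0=p1 and ?p2.0=p2 and ?p3.0=p3])
  hence Eqg: "E3 * qg = frm w1 w2 w3 0" unfolding frm_m E3_def qg_def by simp
  have qg0: "0 \<le> qg"
  proof -
    have "qg = frm w1 w2 w3 0 / E3" using Eqg E3p by (simp add: field_simps)
    thus ?thesis using frm_nn[of w1 w2 w3 0] E3p by simp
  qed
  define br where "br = m22*m13^2 - 2*m12*m13*m23 + m11*m23^2"
  have B2: "m33 * E2 = E3 + br" using S2_id[of m33 m11 m22 m12 m13 m23] unfolding E2_def E3_def br_def by simp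
  have brm: "m11 * br = (m11*m23 - m12*m13)^2 + E2*m13^2" unfolding br_def E2_def by (simp add: algebra_simps power2_eq_square)
  have br0: "0 \<le> br"
  proof -
    have "0 \<le> m11 * br" unfolding brm using E2p by simp
    thus ?thesis using m11p by (simp add: zero_le_mult_iff)
  qed
  have B1: "m11*m22 = E2 + m12^2" unfolding E2_def by simp
  have i0: "m11*m22*m33*Gxx \<le> N1*N2*N3*N4"
    using m11p m22p m33p Gp N1g N2g N3g N4g by (intro mult_mono) (auto intro: mult_nonneg_nonneg)
  have i1: "E2*m33*Gxx \<le> m11*m22*m33*Gxx" unfolding B1 using m33p Gp by (simp add: algebra_simps)
  have i2: "E3*Gxx \<le> E2*m33*Gxx"
  proof -
    have "E3 \<le> m33*E2" using B2 br0 by simp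
    hence "E3*Gxx \<le> (m33*E2)*Gxx" using Gp by (simp add: mult_right_mono)
    thus ?thesis by (simp add: ac_simps)
  qed
  have i3: "E4 \<le> E3*Gxx" using G3 qg0 by (simp add: algebra_simps)
  have main: "S*(1 + l1^2+l2^2+l3^2+l4^2) \<le> u*(N1*N2*N3*N4)"
  proof -
    have "E4 \<le> N1*N2*N3*N4" using i0 i1 i2 i3 by linarith
    hence "u*E4 \<le> u*(N1*N2*N3*N4)" using u0 by simp
    thus ?thesis using uE4 by simp
  qed
  have eqc: "d = 0 \<and> h4^2*u = l4^2 \<and> N4 = 1" if eq: "u*(N1*N2*N3*N4) = S*(1 + l1^2+l2^2+l3^2+l4^2)"
  proof -
    have "u*(N1*N2*N3*N4) = u*E4" using eq uE4 by simp
    hence eP: "N1*N2*N3*N4 = E4" using u0 by simp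
    have e3: "E3*Gxx = E4" using i0 i1 i2 i3 eP by linarith
    have e2: "E2*m33*Gxx = E3*Gxx" using i0 i1 i2 i3 eP by linarith
    have e1: "m11*m22*m33*Gxx = E2*m33*Gxx" using i0 i1 i2 i3 eP by linarith
    have e0: "m11*m22*m33*Gxx = N1*N2*N3*N4" using i0 i1 i2 i3 eP by linarith
    have "qg = 0" using G3 e3 by (simp add: algebra_simps)
    hence "frm w1 w2 w3 0 = 0" using Eqg by simp
    hence ws: "w1 = 0" "w2 = 0" "w3 = 0" using frm_pos[of w1 w2 w3 0] by force+
    have "m11*w1 + m12*w2 + m13*w3 = E3*p1"
      unfolding E3_def w1_def w2_def w3_def
      by (rule adj_id(2)[where ?m11.0=m11 and ?m22.0=m22 and mtt=m33 and ?m12.0=m12 and m1t=m13 and m2t=m23 and ?p1.0=p1 and ?p2.0=p2 and ?p3.0=p3])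
    hence p1z: "p1 = 0" using ws E3p by simp
    have "m13*w1 + m23*w2 + m33*w3 = E3*p3"
      unfolding E3_def w1_def w2_def w3_def
      by (rule adj_id(4)[where ?m11.0=m11 and ?m22.0=m22 and mtt=m33 and ?m12.0=m12 and m1t=m13 and m2t=m23 and ?p1.0=p1 and ?p2.0=p2 and ?p3.0=p3])
    hence p3z: "p3 = 0" using ws E3p by simp
    have "br = 0" using e2 B2 Gp by (simp add: algebra_simps)
    hence "(m11*m23 - m12*m13)^2 + E2*m13^2 = 0" using brm by simp
    hence m13z: "m13 = 0" and "m11*m23 - m12*m13 = 0" using E2p
      by (simp_all add: add_nonneg_eq_0_iff)
    hence m23z: "m23 = 0" using m11p by simp
    have "m12^2*(m33*Gxx) = 0" using e1 B1 by (simp add: algebra_simps)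
    hence m12z: "m12 = 0" using m33p Gp by simp
    have N4G: "N4 = Gxx"
    proof -
      have a: "m11*m22*m33*Gxx \<le> m11*m22*m33*N4" using N4g m11p m22p m33p by simp
      have b: "m11*m22*m33*N4 \<le> N1*N2*N3*N4" using N1g N2g N3g m11p m22p m33p Np
        by (intro mult_right_mono mult_mono) (auto intro: mult_nonneg_nonneg)
      have "m11*m22*m33*N4 = m11*m22*m33*Gxx" using a b e0 by linarith
      thus ?thesis using m11p m22p m33p by simp
    qed
    have r12: "b1*b2 = l1*l2" using m12z unfolding m12_def by simp
    have r13: "b1*b3 = l1*l3" using m13z unfolding m13_def by simp
    have r23: "b2*b3 = l2*l3" using m23z unfolding m23_def by simp
    have m14z: "m14 = 0" using p1z m13z unfolding p1_def by simp
    have r14: "b1*b4 = l1*l4" using m14z unfolding m14_def by simp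
    have "b1^2*(l2*l3) = l1^2*(l2*l3)"
    proof -
      have "b1^2*(l2*l3) = b1^2*(b2*b3)" using r23 by simp
      also have "\<dots> = (b1*b2)*(b1*b3)" by (simp add: power2_eq_square)
      also have "\<dots> = l1^2*(l2*l3)" using r12 r13 by (simp add: power2_eq_square)
      finally show ?thesis .
    qed
    hence sb1: "b1^2 = l1^2" using nz by simp
    have "b3^2*(l1*l2) = l3^2*(l1*l2)"
    proof -
      have "b3^2*(l1*l2) = b3^2*(b1*b2)" using r12 by simp
      also have "\<dots> = (b1*b3)*(b2*b3)" by (simp add: power2_eq_square)
      also have "\<dots> = l3^2*(l1*l2)" using r13 r23 by (simp add: power2_eq_square)
      finally show ?thesis .
    qed
    hence sb3: "b3^2 = l3^2" using nz by simp
    have "(b3*b4)*b1^2 = (l3*l4)*b1^2"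
    proof -
      have "(b3*b4)*b1^2 = (b1*b3)*(b1*b4)" by (simp add: power2_eq_square)
      also have "\<dots> = (l3*l4)*l1^2" using r13 r14 by (simp add: power2_eq_square)
      finally show ?thesis using sb1 by simp
    qed
    hence r34: "b3*b4 = l3*l4" using sb1 nz by simp
    have "b4^2*b1^2 = l4^2*b1^2"
    proof -
      have "b4^2*b1^2 = (b1*b4)^2" by (simp add: power2_eq_square)
      also have "\<dots> = l4^2*l1^2" using r14 by (simp add: power2_eq_square)
      finally show ?thesis using sb1 by simp
    qed
    hence sb4: "b4^2 = l4^2" using sb1 nz by simp
    have m33one: "m33 = 1" unfolding m33_def using sb3 by simp
    have m34z: "m34 = 0" unfolding m34_def using r34 by simp
    have dz: "d = 0" using p3z unfolding p3_def m33one m34z by simp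
    have "(h4 * v - b4)^2 = 0" using N4e N4G dz by simp
    hence "h4 * v = b4" by simp
    hence "h4^2*u = l4^2" using sb4 vv by (metis power_mult_distrib)
    moreover have "N4 = 1" using N4G dz unfolding Gxx_def m44_def using sb4 by simp
    ultimately show ?thesis using dz by simp
  qed
  show ?thesis using u0 Np main eqc by blast
qed


lemma pop_closed:
  assumes vm: "valid_model M" and vc: "valid_cevae P"
  shows "pop_elbo M P = ((- ln (sqrt (2*pi*(s1 P)^2)) - ln (sqrt (2*pi*(s2 P)^2)) - ln (sqrt (2*pi*(st P)^2)) - ln (sqrt (2*pi*(sy P)^2))) - (- ln (sqrt (2*pi*(sq P)^2)) + ln (sqrt (2*pi*1^2))) + 1/2 - ((1/(2*(s1 P)^2))*(g1 P)^2*(sq P)^2 + (1/(2*(s2 P)^2))*(g2 P)^2*(sq P)^2 + (1/(2*(st P)^2))*(gt P)^2*(sq P)^2 + (1/(2*(sy P)^2))*(gyz P)^2*(sq P)^2) - (sq P)^2/2) - ((1/(2*(s1 P)^2))*quadM M (1 - (g1 P)*(a1 P)) (- (g1 P)*(a2 P)) (- (g1 P)*(a3 P)) (- (g1 P)*(a4 P)) + (1/(2*(s2 P)^2))*quadM M (- (g2 P)*(a1 P)) (1 - (g2 P)*(a2 P)) (- (g2 P)*(a3 P)) (- (g2 P)*(a4 P)) + (1/(2*(st P)^2))*quadM M (- (gt P)*(a1 P)) (- (gt P)*(a2 P)) (1 - (gt P)*(a3 P)) (- (gt P)*(a4 P)) + (1/(2*(sy P)^2))*quadM M (- (gyz P)*(a1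 P)) (- (gyz P)*(a2 P)) (- (gyt P) - (gyz P)*(a3 P)) (1 - (gyz P)*(a4 P)) + (1/2)*quadM M (a1 P) (a2 P) (a3 P) (a4 P))"
  unfolding pop_elbo_def elbo_cf[OF vc] by (rule pop_sq[OF vm])

definition "lam1 M = c1 M / sig1 M"
definition "lam2 M = c2 M / sig2 M"
definition "lam3 M = ct M / sigt M"
definition "lam4 M = cyz M / sigy M"
definition "gam1 M P = a1 P * sig1 M"
definition "gam2 M P = a2 P * sig2 M"
definition "gam3 M P = (a3 P + a4 P * cyt M) * sigt M"
definition "gam4 M P = a4 P * sigy M"
definition "al M P = lam1 M*gam1 M P+lam2 M*gam2 M P+lam3 M*gam3 M P+lam4 M*gam4 M P"
definition "uu M P = (al M P)^2+(gam1 M P)^2+(gam2 M P)^2+(gam3 M P)^2+(gam4 M P)^2+(sq P)^2"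
definition "kc1 M P = lam1 M*al M P+gam1 M P"
definition "kc2 M P = lam2 M*al M P+gam2 M P"
definition "kc3 M P = lam3 M*al M P+gam3 M P"
definition "kc4 M P = lam4 M*al M P+gam4 M P"
definition "hh1 M P = g1 P / sig1 M"
definition "hh2 M P = g2 P / sig2 M"
definition "hh3 M P = gt P / sigt M"
definition "hh4 M P = gyz P / sigy M"
definition "dd M P = (cyt M - gyt P) * sigt M / sigy M"
definition "NN1 M P = 1 + (lam1 M)^2 - 2*hh1 M P*kc1 M P + (hh1 M P)^2*uu M P"
definition "NN2 M P = 1 + (lam2 M)^2 - 2*hh2 M P*kc2 M P + (hh2 M P)^2*uu M P"
definition "NN3 M P = 1 + (lam3 M)^2 - 2*hh3 M P*kc3 M P + (hh3 M P)^2*uu M P"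
definition "NN4 M P = (1+(lam4 M)^2) + 2*dd M P*lam4 M*lam3 M + (dd M P)^2*(1+(lam3 M)^2) - 2*hh4 M P*(kc4 M P + dd M P*kc3 M P) + (hh4 M P)^2*uu M P"

lemma sigpos: assumes "valid_model M" shows "0 < sig1 M" "0 < sig2 M" "0 < sigt M" "0 < sigy M"
  using assms unfolding valid_model_def by auto

lemma alE: assumes "valid_model M"
  shows "al M P = a1 P * c1 M + a2 P * c2 M + (a3 P + a4 P * cyt M) * ct M + a4 P * cyz M"
  using sigpos[OF assms] unfolding al_def lam1_def lam2_def lam3_def lam4_def gam1_def gam2_def gam3_def gam4_def
  by simp

lemma uuE: "uu M P = (al M P)^2 + (a1 P * sig1 M)^2 + (a2 P * sig2 M)^2 + ((a3 P + a4 P * cyt M) * sigt M)^2 + (a4 P * sigy M)^2 + (sq P)^2"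
  unfolding uu_def gam1_def gam2_def gam3_def gam4_def by simp

lemma Ns1: assumes "valid_model M"
  shows "(sig1 M)^2 * NN1 M P = (sig1 M)^2 + (c1 M)^2 - 2*g1 P*(c1 M * al M P + a1 P * (sig1 M)^2) + (g1 P)^2 * uu M P"
  using sigpos[OF assms] unfolding NN1_def lam1_def hh1_def kc1_def gam1_def
  by (simp add: field_simps power2_eq_square)

lemma Q1: assumes "valid_model M"
  shows "quadM M (1 - (g1 P)*(a1 P)) (- (g1 P)*(a2 P)) (- (g1 P)*(a3 P)) (- (g1 P)*(a4 P)) = (sig1 M)^2 * NN1 M P - (g1 P)^2 * (sq P)^2"
  unfolding Ns1[OF assms] uuE alE[OF assms] quadM_def by (simp add: algebra_simps power2_eq_square)

lemma Ns2: assumes "valid_model M"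
  shows "(sig2 M)^2 * NN2 M P = (sig2 M)^2 + (c2 M)^2 - 2*g2 P*(c2 M * al M P + a2 P * (sig2 M)^2) + (g2 P)^2 * uu M P"
  using sigpos[OF assms] unfolding NN2_def lam2_def hh2_def kc2_def gam2_def
  by (simp add: field_simps power2_eq_square)

lemma Q2: assumes "valid_model M"
  shows "quadM M (- (g2 P)*(a1 P)) (1 - (g2 P)*(a2 P)) (- (g2 P)*(a3 P)) (- (g2 P)*(a4 P)) = (sig2 M)^2 * NN2 M P - (g2 P)^2 * (sq P)^2"
  unfolding Ns2[OF assms] uuE alE[OF assms] quadM_def by (simp add: algebra_simps power2_eq_square)

lemma Ns3: assumes "valid_model M"
  shows "(sigt M)^2 * NN3 M P = (sigt M)^2 + (ct M)^2 - 2*gt P*(ct M * al M P + (a3 P + a4 P * cyt M) * (sigt M)^2) + (gt P)^2 * uu M P"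
  using sigpos[OF assms] unfolding NN3_def lam3_def hh3_def kc3_def gam3_def
  by (simp add: field_simps power2_eq_square)

lemma Q3: assumes "valid_model M"
  shows "quadM M (- (gt P)*(a1 P)) (- (gt P)*(a2 P)) (1 - (gt P)*(a3 P)) (- (gt P)*(a4 P)) = (sigt M)^2 * NN3 M P - (gt P)^2 * (sq P)^2"
  unfolding Ns3[OF assms] uuE alE[OF assms] quadM_def by (simp add: algebra_simps power2_eq_square)

lemma Ns4: assumes "valid_model M"
  shows "(sigy M)^2 * NN4 M P = (sigy M)^2 + (cyz M)^2 + 2*(cyt M - gyt P)*cyz M*ct M + (cyt M - gyt P)^2*((sigt M)^2 + (ct M)^2)
     - 2*gyz P*(cyz M * al M P + a4 P * (sigy M)^2) - 2*gyz P*(cyt M - gyt P)*(ct M * al M P + (a3 P + a4 P * cyt M)*(sigt M)^2)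
     + (gyz P)^2 * uu M P"
  using sigpos[OF assms] unfolding NN4_def lam4_def lam3_def hh4_def kc4_def kc3_def gam4_def gam3_def dd_def
  by (simp add: field_simps power2_eq_square)

lemma Q4: assumes "valid_model M"
  shows "quadM M (- (gyz P)*(a1 P)) (- (gyz P)*(a2 P)) (- (gyt P) - (gyz P)*(a3 P)) (1 - (gyz P)*(a4 P)) = (sigy M)^2 * NN4 M P - (gyz P)^2 * (sq P)^2"
  unfolding Ns4[OF assms] uuE alE[OF assms] quadM_def by (simp add: algebra_simps power2_eq_square)

lemma Q5: assumes "valid_model M"
  shows "quadM M (a1 P) (a2 P) (a3 P) (a4 P) = uu M P - (sq P)^2"
  unfolding uuE alE[OF assms] quadM_def by (simp add: algebra_simps power2_eq_square)

lemma pop_N: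
  assumes vm: "valid_model M" and vc: "valid_cevae P"
  shows "pop_elbo M P = ((- ln (sqrt (2*pi*(s1 P)^2)) - ln (sqrt (2*pi*(s2 P)^2)) - ln (sqrt (2*pi*(st P)^2)) - ln (sqrt (2*pi*(sy P)^2))) - (- ln (sqrt (2*pi*(sq P)^2)) + ln (sqrt (2*pi*1^2))) + 1/2) - ((1/(2*(s1 P)^2))*((sig1 M)^2*NN1 M P) + (1/(2*(s2 P)^2))*((sig2 M)^2*NN2 M P) + (1/(2*(st P)^2))*((sigt M)^2*NN3 M P) + (1/(2*(sy P)^2))*((sigy M)^2*NN4 M P)) - uu M P/2"
  unfolding pop_closed[OF vm vc] Q1[OF vm] Q2[OF vm] Q3[OF vm] Q4[OF vm] Q5[OF vm]
  by (simp add: algebra_simps)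


lemma ln_sqrt_pos: "0 < x \<Longrightarrow> ln (sqrt x) = ln x / 2"
  by (simp add: ln_sqrt)

lemma node_slack:
  fixes s X :: real
  assumes s: "0 < s" and X: "0 < X"
  shows "- ln (sqrt (2*pi* s^2)) - (1/(2* s^2))*X \<le> - ln (sqrt (2*pi*X)) - 1/2"
    and "- ln (sqrt (2*pi* s^2)) - (1/(2* s^2))*X = - ln (sqrt (2*pi*X)) - 1/2 \<Longrightarrow> s^2 = X"
proof -
  define r where "r = X / s^2"
  have r0: "0 < r" unfolding r_def using s X by simp
  have A0: "0 < 2*pi* s^2" using s by simp
  have eX: "2*pi*X = (2*pi* s^2)*r" unfolding r_def using s by simp
  have l1: "ln (sqrt (2*pi*X)) = ln (2*pi* s^2)/2 + ln r/2"
  proof -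
    have p: "0 < (2*pi* s^2)*r" using A0 r0 by simp
    have "ln (sqrt ((2*pi* s^2)*r)) = ln ((2*pi* s^2)*r)/2" using p by (rule ln_sqrt_pos)
    also have "\<dots> = (ln (2*pi* s^2) + ln r)/2" using ln_mult_pos[OF A0 r0] by (simp only:)
    finally show ?thesis unfolding eX by (simp add: add_divide_distrib)
  qed
  have l2: "ln (sqrt (2*pi* s^2)) = ln (2*pi* s^2)/2" using A0 by (simp add: ln_sqrt_pos)
  have l3: "(1/(2* s^2))*X = r/2" unfolding r_def by simp
  have lr: "ln r \<le> r - 1" using ln_le_minus_one[OF r0] .
  show "- ln (sqrt (2*pi* s^2)) - (1/(2* s^2))*X \<le> - ln (sqrt (2*pi*X)) - 1/2"
    unfolding l1 l2 l3 using lr by linarith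
  assume "- ln (sqrt (2*pi* s^2)) - (1/(2* s^2))*X = - ln (sqrt (2*pi*X)) - 1/2"
  hence "ln r = r - 1" unfolding l1 l2 l3 by linarith
  hence "r = 1" using ln_eq_minus_one[OF r0] by simp
  thus "s^2 = X" unfolding r_def using s by simp
qed

lemma fin_ineq:
  fixes s1 s2 s3 s4 \<sigma>1 \<sigma>2 \<sigma>3 \<sigma>4 N1 N2 N3 N4 u S Sst \<Lambda> Lo G :: real
  assumes sp: "0 < s1" "0 < s2" "0 < s3" "0 < s4" and \<sigma>p: "0 < \<sigma>1" "0 < \<sigma>2" "0 < \<sigma>3" "0 < \<sigma>4"
    and Np: "0 < N1" "0 < N2" "0 < N3" "0 < N4" and up: "0 < u" and Sp: "0 < S"
    and Lp: "0 \<le> \<Lambda>" and Sst: "Sst*(1+\<Lambda>) = 1"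
    and key: "S*(1+\<Lambda>) \<le> u*(N1*N2*N3*N4)"
    and G: "G = ((- ln (sqrt (2*pi*\<sigma>1^2)) - ln (sqrt (2*pi*\<sigma>2^2)) - ln (sqrt (2*pi*\<sigma>3^2)) - ln (sqrt (2*pi*\<sigma>4^2)))
              - (- ln (sqrt (2*pi*Sst)) + Lo) + 1/2)
              - ((1/(2*\<sigma>1^2))*(\<sigma>1^2*1) + (1/(2*\<sigma>2^2))*(\<sigma>2^2*1) + (1/(2*\<sigma>3^2))*(\<sigma>3^2*1) + (1/(2*\<sigma>4^2))*(\<sigma>4^2*1)) - 1/2"
    and le: "G \<le> ((- ln (sqrt (2*pi* s1^2)) - ln (sqrt (2*pi* s2^2)) - ln (sqrt (2*pi* s3^2)) - ln (sqrt (2*pi* s4^2)))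
              - (- ln (sqrt (2*pi*S)) + Lo) + 1/2)
             - ((1/(2* s1^2))*(\<sigma>1^2*N1) + (1/(2* s2^2))*(\<sigma>2^2*N2) + (1/(2* s3^2))*(\<sigma>3^2*N3) + (1/(2* s4^2))*(\<sigma>4^2*N4)) - u/2"
  shows "s1^2 = \<sigma>1^2*N1 \<and> s2^2 = \<sigma>2^2*N2 \<and> s3^2 = \<sigma>3^2*N3 \<and> s4^2 = \<sigma>4^2*N4 \<and> u = 1 \<and> u*(N1*N2*N3*N4) = S*(1+\<Lambda>)"
proof -
  have Xp: "0 < \<sigma>1^2*N1" "0 < \<sigma>2^2*N2" "0 < \<sigma>3^2*N3" "0 < \<sigma>4^2*N4" using \<sigma>p Np by simp_all
  note a1 = node_slack[OF sp(1) Xp(1)] and a2 = node_slack[OF sp(2) Xp(2)]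
    and a3 = node_slack[OF sp(3) Xp(3)] and a4 = node_slack[OF sp(4) Xp(4)]
  have lnX: "ln (sqrt (2*pi*(\<sigma>^2*N))) = ln (sqrt (2*pi*\<sigma>^2)) + ln N/2" if "0 < \<sigma>" "0 < N" for \<sigma> N :: real
  proof -
    have "2*pi*(\<sigma>^2*N) = (2*pi*\<sigma>^2)*N" by simp
    thus ?thesis using that by (simp add: ln_sqrt_pos ln_mult add_divide_distrib)
  qed
  have lS: "ln (sqrt (2*pi*Sst)) - ln (sqrt (2*pi*S)) = (- ln (1+\<Lambda>) - ln S)/2"
  proof -
    have Ss: "Sst = 1/(1+\<Lambda>)" using Sst Lp by (simp add: field_simps)
    have "0 < Sst" unfolding Ss using Lp by simp
    hence "ln (sqrt (2*pi*Sst)) = (ln (2*pi) + ln Sst)/2" by (simp add: ln_sqrt_pos ln_mult)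
    moreover have "ln (sqrt (2*pi*S)) = (ln (2*pi) + ln S)/2" using Sp by (simp add: ln_sqrt_pos ln_mult)
    moreover have "ln Sst = - ln (1+\<Lambda>)" unfolding Ss using Lp by (simp add: ln_div)
    ultimately show ?thesis by (simp add: field_simps)
  qed
  have prodpos: "0 < N1*N2*N3*N4" using Np by simp
  have lnprod: "ln (u*(N1*N2*N3*N4)) = ln u + ln N1 + ln N2 + ln N3 + ln N4"
    using Np up by (simp add: ln_mult)
  have lnS: "ln (S*(1+\<Lambda>)) = ln S + ln (1+\<Lambda>)" using Sp Lp by (simp add: ln_mult)
  have kl: "ln (S*(1+\<Lambda>)) \<le> ln (u*(N1*N2*N3*N4))"
    using key Sp Lp up prodpos by (subst ln_le_cancel_iff) simp_all
  have lu: "ln u \<le> u - 1" using ln_le_minus_one[OF up] .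
  define D where "D = ln (u*(N1*N2*N3*N4)) - ln (S*(1+\<Lambda>))"
  define Du where "Du = u - 1 - ln u"
  have D0: "0 \<le> D" unfolding D_def using kl by simp
  have Du0: "0 \<le> Du" unfolding Du_def using lu by simp
  note X1 = lnX[OF \<sigma>p(1) Np(1)] and X2 = lnX[OF \<sigma>p(2) Np(2)] and X3 = lnX[OF \<sigma>p(3) Np(3)] and X4 = lnX[OF \<sigma>p(4) Np(4)]
  define T1 where "T1 = - ln (sqrt (2*pi* s1^2)) - (1/(2* s1^2))*(\<sigma>1^2*N1)"
  define T2 where "T2 = - ln (sqrt (2*pi* s2^2)) - (1/(2* s2^2))*(\<sigma>2^2*N2)"
  define T3 where "T3 = - ln (sqrt (2*pi* s3^2)) - (1/(2* s3^2))*(\<sigma>3^2*N3)"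
  define T4 where "T4 = - ln (sqrt (2*pi* s4^2)) - (1/(2* s4^2))*(\<sigma>4^2*N4)"
  define B1 where "B1 = - ln (sqrt (2*pi*(\<sigma>1^2*N1))) - 1/2"
  define B2 where "B2 = - ln (sqrt (2*pi*(\<sigma>2^2*N2))) - 1/2"
  define B3 where "B3 = - ln (sqrt (2*pi*(\<sigma>3^2*N3))) - 1/2"
  define B4 where "B4 = - ln (sqrt (2*pi*(\<sigma>4^2*N4))) - 1/2"
  have t1: "T1 \<le> B1" and t2: "T2 \<le> B2" and t3: "T3 \<le> B3" and t4: "T4 \<le> B4"
    unfolding T1_def T2_def T3_def T4_def B1_def B2_def B3_def B4_def using a1(1) a2(1) a3(1) a4(1) by simp_all
  have popE: "((- ln (sqrt (2*pi* s1^2)) - ln (sqrt (2*pi* s2^2)) - ln (sqrt (2*pi* s3^2)) - ln (sqrt (2*pi* s4^2)))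
              - (- ln (sqrt (2*pi*S)) + Lo) + 1/2)
             - ((1/(2* s1^2))*(\<sigma>1^2*N1) + (1/(2* s2^2))*(\<sigma>2^2*N2) + (1/(2* s3^2))*(\<sigma>3^2*N3) + (1/(2* s4^2))*(\<sigma>4^2*N4)) - u/2
     = T1 + T2 + T3 + T4 + ln (sqrt (2*pi*S)) - Lo + 1/2 - u/2"
    unfolding T1_def T2_def T3_def T4_def by simp
  have GB: "G = B1 + B2 + B3 + B4 + ln (sqrt (2*pi*S)) - Lo + 1/2 - u/2 + D/2 + Du/2"
    unfolding G B1_def B2_def B3_def B4_def X1 X2 X3 X4 D_def Du_def lnprod lnS
    using lS \<sigma>p by (simp add: field_simps)
  have sum0: "(B1 - T1) + (B2 - T2) + (B3 - T3) + (B4 - T4) + D/2 + Du/2 \<le> 0"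
    using le unfolding popE GB by linarith
  have z1: "T1 = B1" and z2: "T2 = B2" and z3: "T3 = B3" and z4: "T4 = B4" and zD: "D = 0" and zDu: "Du = 0"
    using sum0 t1 t2 t3 t4 D0 Du0 by linarith+
  have "s1^2 = \<sigma>1^2*N1" using a1(2) z1 unfolding T1_def B1_def by simp
  moreover have "s2^2 = \<sigma>2^2*N2" using a2(2) z2 unfolding T2_def B2_def by simp
  moreover have "s3^2 = \<sigma>3^2*N3" using a3(2) z3 unfolding T3_def B3_def by simp
  moreover have "s4^2 = \<sigma>4^2*N4" using a4(2) z4 unfolding T4_def B4_def by simp
  moreover have "u = 1" using zDu ln_eq_minus_one[OF up] unfolding Du_def by simp
  moreover have "u*(N1*N2*N3*N4) = S*(1+\<Lambda>)"
  proof -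
    have "ln (u*(N1*N2*N3*N4)) = ln (S*(1+\<Lambda>))" using zD unfolding D_def by simp
    moreover have "0 < u*(N1*N2*N3*N4)" using up prodpos by simp
    moreover have "0 < S*(1+\<Lambda>)" using Sp Lp by simp
    ultimately show ?thesis by simp
  qed
  ultimately show ?thesis by blast
qed


lemma std_normal_neg: "std_normal_density (- z) = std_normal_density z"
  unfolding normal_density_def by simp

theorem proposition1:
  fixes M :: true_model and P :: lin_cevae
  assumes "valid_model M"
    and "valid_cevae P"
    and "\<forall>Q. valid_cevae Q \<longrightarrow> pop_elbo M Q \<le> pop_elbo M P"
  shows "\<forall>t y. cevae_do P t y = true_do M t y"
proof -
  note vm = assms(1) and vc = assms(2) and opt = assms(3)
  have \<sigma>p: "0 < sig1 M" "0 < sig2 M" "0 < sigt M" "0 < sigy M" using sigpos[OF vm] by auto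
  have cnz: "c1 M \<noteq> 0" "c2 M \<noteq> 0" "ct M \<noteq> 0" using vm unfolding valid_model_def by auto
  have sp: "0 < s1 P" "0 < s2 P" "0 < st P" "0 < sy P" "0 < sq P" using vc unfolding valid_cevae_def by auto
  define \<Lambda> where "\<Lambda> = (lam1 M)^2 + (lam2 M)^2 + (lam3 M)^2 + (lam4 M)^2"
  have L0: "0 \<le> \<Lambda>" unfolding \<Lambda>_def by simp
  define Sst where "Sst = 1/(1+\<Lambda>)"
  have Sst0: "0 < Sst" unfolding Sst_def using L0 by simp
  have SstL: "Sst*(1+\<Lambda>) = 1" unfolding Sst_def using L0 by simp
  define Qs :: lin_cevae where "Qs = \<lparr>g1 = c1 M, g2 = c2 M, gt = ct M, gyz = cyz M, gyt = cyt M,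
     s1 = sig1 M, s2 = sig2 M, st = sigt M, sy = sigy M,
     a1 = Sst * c1 M / (sig1 M)^2, a2 = Sst * c2 M / (sig2 M)^2,
     a3 = Sst * (ct M / (sigt M)^2 - cyz M * cyt M / (sigy M)^2), a4 = Sst * cyz M / (sigy M)^2,
     sq = sqrt Sst\<rparr>"
  have vQ: "valid_cevae Qs" unfolding Qs_def valid_cevae_def using \<sigma>p Sst0 by simp
  have gQ: "gam1 M Qs = Sst * lam1 M" "gam2 M Qs = Sst * lam2 M" "gam3 M Qs = Sst * lam3 M" "gam4 M Qs = Sst * lam4 M"
    unfolding Qs_def gam1_def gam2_def gam3_def gam4_def lam1_def lam2_def lam3_def lam4_def
    using \<sigma>p by (simp_all add: field_simps power2_eq_square)
  have alQ: "al M Qs = Sst * \<Lambda>" unfolding al_def gQ \<Lambda>_def by (simp add: algebra_simps power2_eq_square)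
  have sqQ: "(sq Qs)^2 = Sst" unfolding Qs_def using Sst0 by simp
  have uuQ: "uu M Qs = 1"
  proof -
    have "uu M Qs = (Sst*\<Lambda>)^2 + Sst^2*\<Lambda> + Sst" unfolding uu_def alQ gQ sqQ \<Lambda>_def by (simp add: algebra_simps power2_eq_square)
    also have "\<dots> = Sst*(Sst*(1+\<Lambda>))*\<Lambda> + Sst" by (simp add: algebra_simps power2_eq_square)
    also have "\<dots> = 1" unfolding SstL using SstL by (simp add: algebra_simps)
    finally show ?thesis .
  qed
  have kcQ: "kc1 M Qs = lam1 M" "kc2 M Qs = lam2 M" "kc3 M Qs = lam3 M" "kc4 M Qs = lam4 M"
  proof -
    have hx: "x*(Sst*\<Lambda>) + Sst*x = x" for x
    proof -
      have "x*(Sst*\<Lambda>) + Sst*x = x*(Sst*(1+\<Lambda>))" by (simp add: algebra_simps)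
      thus ?thesis using SstL by simp
    qed
    show "kc1 M Qs = lam1 M" "kc2 M Qs = lam2 M" "kc3 M Qs = lam3 M" "kc4 M Qs = lam4 M"
      unfolding kc1_def kc2_def kc3_def kc4_def alQ gQ hx by simp_all
  qed
  have hQ: "hh1 M Qs = lam1 M" "hh2 M Qs = lam2 M" "hh3 M Qs = lam3 M" "hh4 M Qs = lam4 M" "dd M Qs = 0"
    unfolding hh1_def hh2_def hh3_def hh4_def dd_def lam1_def lam2_def lam3_def lam4_def Qs_def by simp_all
  have NQ: "NN1 M Qs = 1" "NN2 M Qs = 1" "NN3 M Qs = 1" "NN4 M Qs = 1"
    unfolding NN1_def NN2_def NN3_def NN4_def kcQ hQ uuQ by (simp_all add: power2_eq_square)
  define G where "G = ((- ln (sqrt (2*pi*(sig1 M)^2)) - ln (sqrt (2*pi*(sig2 M)^2)) - ln (sqrt (2*pi*(sigt M)^2)) - ln (sqrt (2*pi*(sigy M)^2)))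
              - (- ln (sqrt (2*pi*Sst)) + ln (sqrt (2*pi*1^2))) + 1/2)
              - ((1/(2*(sig1 M)^2))*((sig1 M)^2*1) + (1/(2*(sig2 M)^2))*((sig2 M)^2*1) + (1/(2*(sigt M)^2))*((sigt M)^2*1) + (1/(2*(sigy M)^2))*((sigy M)^2*1)) - 1/2"
  have popQ: "pop_elbo M Qs = G"
    unfolding pop_N[OF vm vQ] NQ uuQ sqQ G_def by (simp add: Qs_def)
  have le: "G \<le> pop_elbo M P" using opt vQ popQ by auto
  have lnz: "lam1 M \<noteq> 0" "lam2 M \<noteq> 0" "lam3 M \<noteq> 0" unfolding lam1_def lam2_def lam3_def using cnz \<sigma>p by simp_all
  have sq0: "0 < (sq P)^2" using sp by simp
  note K = key[OF lnz sq0, where ?q1.0 = "gam1 M P" and ?q2.0 = "gam2 M P" and ?q3.0 = "gam3 M P" and ?q4.0 = "gam4 M P"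
     and ?h1.0 = "hh1 M P" and ?h2.0 = "hh2 M P" and ?h3.0 = "hh3 M P" and ?h4.0 = "hh4 M P" and d = "dd M P" and ?l4.0 = "lam4 M"]
  have K': "0 < uu M P \<and> 0 < NN1 M P \<and> 0 < NN2 M P \<and> 0 < NN3 M P \<and> 0 < NN4 M P \<and>
         (sq P)^2*(1 + (lam1 M)^2+(lam2 M)^2+(lam3 M)^2+(lam4 M)^2) \<le> uu M P*(NN1 M P*NN2 M P*NN3 M P*NN4 M P) \<and>
         (uu M P*(NN1 M P*NN2 M P*NN3 M P*NN4 M P) = (sq P)^2*(1 + (lam1 M)^2+(lam2 M)^2+(lam3 M)^2+(lam4 M)^2) \<longrightarrow>
           dd M P = 0 \<and> (hh4 M P)^2*uu M P = (lam4 M)^2 \<and> NN4 M P = 1)"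
    using K unfolding al_def[symmetric] uu_def[symmetric] kc1_def[symmetric] kc2_def[symmetric] kc3_def[symmetric] kc4_def[symmetric]
      NN1_def[symmetric] NN2_def[symmetric] NN3_def[symmetric] NN4_def[symmetric] .
  have L1: "1 + (lam1 M)^2+(lam2 M)^2+(lam3 M)^2+(lam4 M)^2 = 1 + \<Lambda>" unfolding \<Lambda>_def by simp
  have Kpos: "0 < uu M P" "0 < NN1 M P" "0 < NN2 M P" "0 < NN3 M P" "0 < NN4 M P"
    and Kle: "(sq P)^2*(1+\<Lambda>) \<le> uu M P*(NN1 M P*NN2 M P*NN3 M P*NN4 M P)"
    and Keq: "uu M P*(NN1 M P*NN2 M P*NN3 M P*NN4 M P) = (sq P)^2*(1+\<Lambda>) \<Longrightarrow>
           dd M P = 0 \<and> (hh4 M P)^2*uu M P = (lam4 M)^2 \<and> NN4 M P = 1"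
    using K' unfolding L1 by blast+
  have le': "G \<le> ((- ln (sqrt (2*pi*(s1 P)^2)) - ln (sqrt (2*pi*(s2 P)^2)) - ln (sqrt (2*pi*(st P)^2)) - ln (sqrt (2*pi*(sy P)^2)))
              - (- ln (sqrt (2*pi*(sq P)^2)) + ln (sqrt (2*pi*1^2))) + 1/2)
             - ((1/(2*(s1 P)^2))*((sig1 M)^2*NN1 M P) + (1/(2*(s2 P)^2))*((sig2 M)^2*NN2 M P) + (1/(2*(st P)^2))*((sigt M)^2*NN3 M P) + (1/(2*(sy P)^2))*((sigy M)^2*NN4 M P)) - uu M P/2"
    using le unfolding pop_N[OF vm vc] .
  have F: "(s1 P)^2 = (sig1 M)^2*NN1 M P \<and> (s2 P)^2 = (sig2 M)^2*NN2 M P \<and> (st P)^2 = (sigt M)^2*NN3 M P \<and>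
      (sy P)^2 = (sigy M)^2*NN4 M P \<and> uu M P = 1 \<and> uu M P*(NN1 M P*NN2 M P*NN3 M P*NN4 M P) = (sq P)^2*(1+\<Lambda>)"
    by (rule fin_ineq[OF sp(1-4) \<sigma>p Kpos(2-5) Kpos(1) sq0 L0 SstL Kle G_def le'])
  have E: "dd M P = 0" "(hh4 M P)^2*uu M P = (lam4 M)^2" "NN4 M P = 1" using Keq F by auto
  have gyt: "gyt P = cyt M" using E(1) \<sigma>p unfolding dd_def by simp
  have "(gyz P / sigy M)^2 = (cyz M / sigy M)^2" using E(2) F unfolding hh4_def lam4_def by simp
  hence gyz2: "(gyz P)^2 = (cyz M)^2" using \<sigma>p by (simp add: power_divide)
  have "(sy P)^2 = (sigy M)^2" using F E(3) by simp
  hence sy: "sy P = sigy M" using sp \<sigma>p by (simp add: power2_eq_iff_nonneg)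
  have gyz: "gyz P = cyz M \<or> gyz P = - cyz M" using gyz2 by (simp add: power2_eq_iff)
  show ?thesis
  proof (intro allI)
    fix t y
    show "cevae_do P t y = true_do M t y"
    proof (cases "gyz P = cyz M")
      case True
      thus ?thesis unfolding cevae_do_def true_do_def gyt sy by simp
    next
      case False
      hence gm: "gyz P = - cyz M" using gyz by simp
      have "cevae_do P t y = (\<integral>z. normal_density (- cyz M * z + cyt M * t) (sigy M) y * std_normal_density z \<partial>lborel)"
        unfolding cevae_do_def gyt sy gm by simp
      also have "\<dots> = \<bar>-1\<bar> *\<^sub>R (\<integral>z. normal_density (- cyz M * (0 + -1*z) + cyt M * t) (sigy M) y * std_normal_density (0 + -1*z) \<partial>lborel)"
        by (rule lborel_integral_real_affine) simp
      also have "\<dots> = true_do M t y" unfolding true_do_def by (simp add: std_normal_neg)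
      finally show ?thesis .
    qed
  qed
qed

end
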